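(* Let $q$ be an indeterminate, and in the algebra $\mathbf{Sym}$ of noncommutative symmetric functions over $\mathbb{C}(q)$ (generated by $S_1,S_2,\dots$, with $S_0=1$) define $g_0=1$ and, for $n\ge1$, $$(q^n-1)\,g_n=\sum_{k=1}^{n} S_k\sum_{\substack{j_1+\cdots+j_{k+1}=n-k\\ j_i\ge 0}} g_{j_1}\cdots g_{j_{k+1}},\qquad \tilde g_n=(q)_n g_n,\ (q)_n=\prod_{k=1}^n(q^k-1).$$ Then for every $n\ge1$ and every composition $I$ of $n$, the coefficient of the ribbon $R_I$ in $\tilde g_n$ equals $$\sum_{\sigma\in\mathfrak S_n} q^{\mathrm{inv}(\sigma)-\mathrm{inv}(\alpha)+\mathrm{inv}(\alpha,D)},$$ where, for each $\sigma$, $\alpha$ is the permutation with the fewest inversions in the sylvester class of $\sigma$, $D$ is the descent set of the conjugate composition $\tilde I$ of $I$, and $\mathrm{inv}(\alpha,D)$ is the number of pairs $1\le i<j\le n$ with $\alpha_i>\alpha_j$ and $j-1\in D$.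
   Context: For a composition $I=(i_1,\dots,i_r)$ of $n$, $S^I=S_{i_1}\cdots S_{i_r}$; the ribbon basis is $R_I=\sum_J(-1)^{\ell(I)-\ell(J)}S^J$, summed over compositions $J$ of $n$ coarser than $I$ ($\ell$ = number of parts). The descent set of $I$ is $D(I)=\{i_1,i_1+i_2,\dots,i_1+\cdots+i_{r-1}\}$, and the conjugate composition $\tilde I$ is the composition of $n$ with $D(\tilde I)=\{n-d: d\in\{1,\dots,n-1\}\setminus D(I)\}$. $\mathrm{inv}(\sigma)$ is the number of inversions of a permutation $\sigma$ (written as a word $\sigma_1\cdots\sigma_n$). The decreasing binary tree of a word $w=unv$ with distinct letters and maximal letter $n$ is the binary tree with root $n$, left subtree the decreasing tree of $u$ and right subtree that of $v$ (the empty word giving the empty tree). Two permutations $\sigma,\tau\in\mathfrak S_n$ are sylvester-equivalent if the decreasing binary trees of $\sigma^{-1}$ and $\tau^{-1}$ have the same shape; the equivalence classes are sylvester classes, and each contains a unique permutation with the fewest inversions. *)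

theory Defs
  imports "HOL-Computational_Algebra.Computational_Algebra" "HOL-Library.Tree"
begin

type_synonym K = "complex poly fract"

definition qq :: K where "qq = Fract [:0, 1:] 1"

definition qpoch :: "nat \<Rightarrow> K" where
  "qpoch n = (\<Prod>k=1..n. qq ^ k - 1)"

text \<open>Sym is the free associative algebra on S_1, S_2, ...; its elements are
  represented by their coefficient functions in the basis S^I, I ranging over
  words (compositions) in positive integers.  Product = concatenation.\<close>

type_synonym nsym = "nat list \<Rightarrow> K"

definition nsym_one :: nsym where
  "nsym_one = (\<lambda>w. if w = [] then 1 else 0)"

definition nsym_mult :: "nsym \<Rightarrow> nsym \<Rightarrow> nsym" where
  "nsym_mult f g = (\<lambda>w. \<Sum>i\<le>length w. f (take i w) * g (drop i w))"

definition nsym_smult :: "K \<Rightarrow> nsym \<Rightarrow> nsym" where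
  "nsym_smult c f = (\<lambda>w. c * f w)"

definition nsym_sum :: "'a set \<Rightarrow> ('a \<Rightarrow> nsym) \<Rightarrow> nsym" where
  "nsym_sum A F = (\<lambda>w. \<Sum>a\<in>A. F a w)"

definition nsym_prod :: "nsym list \<Rightarrow> nsym" where
  "nsym_prod xs = foldr nsym_mult xs nsym_one"

definition S :: "nat \<Rightarrow> nsym" where
  "S k = (if k = 0 then nsym_one else (\<lambda>w. if w = [k] then 1 else 0))"

definition Spow :: "nat list \<Rightarrow> nsym" where
  "Spow I = nsym_prod (map S I)"

definition comps :: "nat \<Rightarrow> nat list set" where
  "comps n = {I. sum_list I = n \<and> 0 \<notin> set I}"

definition wcomps :: "nat \<Rightarrow> nat \<Rightarrow> nat list set" where
  "wcomps k m = {js. length js = k \<and> sum_list js = m}"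

definition descents :: "nat list \<Rightarrow> nat set" where
  "descents I = {sum_list (take i I) | i. 1 \<le> i \<and> i < length I}"

definition ribbon :: "nat list \<Rightarrow> nsym" where
  "ribbon I = nsym_sum {J \<in> comps (sum_list I). descents J \<subseteq> descents I}
      (\<lambda>J. nsym_smult ((-1) ^ (length I - length J)) (Spow J))"

definition conj_comp :: "nat list \<Rightarrow> nat list" where
  "conj_comp I = (let n = sum_list I in
     THE J. J \<in> comps n \<and> descents J = (\<lambda>d. n - d) ` ({1..n-1} - descents I))"

definition perms :: "nat \<Rightarrow> nat list set" where
  "perms n = {s. distinct s \<and> set s = {1..n}}"

definition invs :: "nat list \<Rightarrow> nat" where
  "invs s = card {(i, j). i < j \<and> j < length s \<and> s ! i > s ! j}"

text \<open>inv(alpha, D): pairs 1<=i<j<=n (1-indexed) with alpha_i > alpha_j and j-1 in D;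
  in 0-indexed positions j' = j - 1 this reads j' in D.\<close>
definition invD :: "nat list \<Rightarrow> nat set \<Rightarrow> nat" where
  "invD s D = card {(i, j). i < j \<and> j < length s \<and> s ! i > s ! j \<and> j \<in> D}"

definition perm_inverse :: "nat list \<Rightarrow> nat list" where
  "perm_inverse s = map (\<lambda>i. (THE p. p < length s \<and> s ! p = i) + 1) [1..<length s + 1]"

lemma takeWhile_neq_less:
  "m \<in> set w \<Longrightarrow> length (takeWhile (\<lambda>y. y \<noteq> m) w) < length w"
  by (induction w) auto

lemma takeWhile_neq_Max_less:
  "length (takeWhile (\<lambda>y. y \<noteq> Max (set (x # xs))) (x # xs)) < Suc (length xs)"
proof -
  have "Max (set (x # xs)) \<in> set (x # xs)" by (rule Max_in) auto
  from takeWhile_neq_less[OF this] show ?thesis by (simp only: length_Cons)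
qed

lemma tl_dropWhile_less: "length (tl (dropWhile P (x # xs))) < Suc (length xs)"
proof -
  have "length (dropWhile P (x # xs)) \<le> Suc (length xs)"
    using length_dropWhile_le[of P "x # xs"] by simp
  then show ?thesis by simp
qed

function dtree :: "nat list \<Rightarrow> nat tree" where
  "dtree [] = Leaf"
| "dtree (x # xs) =
     (let m = Max (set (x # xs)) in
      Node (dtree (takeWhile (\<lambda>y. y \<noteq> m) (x # xs))) m
           (dtree (tl (dropWhile (\<lambda>y. y \<noteq> m) (x # xs)))))"
  by pat_completeness auto
termination
  apply (relation "measure length")
    apply simp
   apply (simp only: in_measure Let_def length_Cons takeWhile_neq_Max_less)
  apply (simp only: in_measure length_Cons tl_dropWhile_less)
  done

definition shape :: "nat tree \<Rightarrow> unit tree" where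
  "shape t = map_tree (\<lambda>_. ()) t"

definition sylv_equiv :: "nat list \<Rightarrow> nat list \<Rightarrow> bool" where
  "sylv_equiv s t \<longleftrightarrow> shape (dtree (perm_inverse s)) = shape (dtree (perm_inverse t))"

definition sylv_class :: "nat \<Rightarrow> nat list \<Rightarrow> nat list set" where
  "sylv_class n s = {t \<in> perms n. sylv_equiv s t}"

definition sylv_min :: "nat \<Rightarrow> nat list \<Rightarrow> nat list" where
  "sylv_min n s = (THE a. a \<in> sylv_class n s \<and> (\<forall>b\<in>sylv_class n s. invs a \<le> invs b))"

definition ribbon_coef :: "nat \<Rightarrow> nat list \<Rightarrow> K" where
  "ribbon_coef n I = (\<Sum>s\<in>perms n.
      let a = sylv_min n s in
      qq ^ (invs s - invs a + invD a (descents (conj_comp I))))"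

end

theory Submission
  imports Defs
begin


lemma qq_pow: "qq ^ m = Fract ([:0, 1:] ^ m) 1"
  by (induction m) (simp_all add: qq_def One_fract_def)

lemma qq_nz: "qq \<noteq> 0" unfolding qq_def by (simp add: Zero_fract_def eq_fract)

lemma qq_pow_ne1: "m \<noteq> 0 \<Longrightarrow> qq ^ m \<noteq> 1"
proof
  assume m: "m \<noteq> 0" and h: "qq ^ m = 1"
  hence "([:0, 1:] :: complex poly) ^ m = 1" by (simp add: qq_pow One_fract_def eq_fract)
  hence "degree (([:0, 1:] :: complex poly) ^ m) = 0" by simp
  moreover have "degree (([:0, 1:] :: complex poly) ^ m) = m" by (simp add: degree_power_eq)
  ultimately show False using m by simp
qed

lemma qq_pow_m1_nz: "m \<noteq> 0 \<Longrightarrow> qq ^ m - 1 \<noteq> 0"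
  using qq_pow_ne1 by simp

lemma qpoch_Suc: "qpoch (Suc n) = qpoch n * (qq ^ Suc n - 1)"
  unfolding qpoch_def by simp

lemma qpoch_0: "qpoch 0 = 1" unfolding qpoch_def by simp

lemma qpoch_nz: "qpoch n \<noteq> 0"
  unfolding qpoch_def using qq_pow_ne1 by (auto simp: prod_zero_iff)




section \<open>nsym algebra\<close>

lemma nsym_sum_apply[simp]: "nsym_sum A F w = (\<Sum>a\<in>A. F a w)"
  by (simp add: nsym_sum_def)
lemma nsym_smult_apply[simp]: "nsym_smult c f w = c * f w"
  by (simp add: nsym_smult_def)
lemma nsym_one_Nil[simp]: "nsym_one [] = 1" and nsym_one_Cons[simp]: "nsym_one (k # w) = 0"
  by (simp_all add: nsym_one_def)

lemma mult_Nil[simp]: "nsym_mult f g [] = f [] * g []"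
  by (simp add: nsym_mult_def)

lemma mult_Cons: "nsym_mult f g (k # w) = f [] * g (k # w) + nsym_mult (\<lambda>u. f (k # u)) g w"
  unfolding nsym_mult_def
  by (simp only: length_Cons sum.atMost_Suc_shift take_Suc_Cons drop_Suc_Cons take_0 drop_0)

lemma mult_lin_left: "nsym_mult (\<lambda>u. c * a u + b u) h w = c * nsym_mult a h w + nsym_mult b h w"
  unfolding nsym_mult_def by (simp add: algebra_simps sum.distrib sum_distrib_left)

lemma mult_assoc_pt: "nsym_mult (nsym_mult f g) h w = nsym_mult f (nsym_mult g h) w"
proof (induction w arbitrary: f g h)
  case Nil
  then show ?case by simp
next
  case (Cons k w)
  have "nsym_mult (nsym_mult f g) h (k # w) =
        f [] * g [] * h (k # w) + nsym_mult (\<lambda>u. f [] * g (k # u) + nsym_mult (\<lambda>u. f (k # u)) g u) h w"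
    by (simp add: mult_Cons)
  also have "\<dots> = f [] * g [] * h (k # w) + f [] * nsym_mult (\<lambda>u. g (k # u)) h w
       + nsym_mult (nsym_mult (\<lambda>u. f (k # u)) g) h w"
    by (simp add: mult_lin_left)
  also have "\<dots> = nsym_mult f (nsym_mult g h) (k # w)"
    by (simp add: mult_Cons Cons.IH algebra_simps)
  finally show ?case .
qed

lemma mult_assoc: "nsym_mult (nsym_mult f g) h = nsym_mult f (nsym_mult g h)"
  using mult_assoc_pt by blast

lemma mult_one_right: "nsym_mult f nsym_one = f"
proof
  fix w show "nsym_mult f nsym_one w = f w"
    by (induction w arbitrary: f) (simp_all add: mult_Cons)
qed

lemma mult_zero_left: "nsym_mult (\<lambda>u. 0) f = (\<lambda>u. 0)"
  by (rule ext) (simp add: nsym_mult_def)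

lemma mult_one_left: "nsym_mult nsym_one f = f"
proof
  fix w show "nsym_mult nsym_one f w = f w"
    by (cases w) (simp_all add: mult_Cons mult_zero_left)
qed

lemma mult_sum_left: "finite A \<Longrightarrow> nsym_mult (nsym_sum A F) h = nsym_sum A (\<lambda>a. nsym_mult (F a) h)"
  by (rule ext) (simp add: nsym_mult_def sum_distrib_right sum.swap[of _ A])

lemma mult_sum_right: "finite A \<Longrightarrow> nsym_mult h (nsym_sum A F) = nsym_sum A (\<lambda>a. nsym_mult h (F a))"
  by (rule ext) (simp add: nsym_mult_def sum_distrib_left sum.swap[of _ A])

lemma mult_smult_left: "nsym_mult (nsym_smult c f) h = nsym_smult c (nsym_mult f h)"
  by (rule ext) (simp add: nsym_mult_def sum_distrib_left algebra_simps)

lemma mult_smult_right: "nsym_mult h (nsym_smult c f) = nsym_smult c (nsym_mult h f)"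
  by (rule ext) (simp add: nsym_mult_def sum_distrib_left algebra_simps)

lemma S_Nil: "k \<ge> 1 \<Longrightarrow> S k [] = 0"
  by (simp add: S_def)

lemma S_mult_Nil: "k \<ge> 1 \<Longrightarrow> nsym_mult (S k) f [] = 0"
  by (simp add: S_Nil)

lemma S_mult_Cons: "k \<ge> 1 \<Longrightarrow> nsym_mult (S k) f (j # w) = (if j = k then f w else 0)"
proof -
  assume k: "k \<ge> 1"
  have "(\<lambda>u. S k (j # u)) = (if j = k then nsym_one else (\<lambda>u. 0))"
    using k by (auto simp: S_def nsym_one_def)
  then show ?thesis using k
    by (simp add: mult_Cons S_Nil mult_one_left mult_zero_left)
qed

lemma Spow_Cons: "Spow (k # J) = nsym_mult (S k) (Spow J)"
  by (simp add: Spow_def nsym_prod_def)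

lemma Spow_apply: "0 \<notin> set J \<Longrightarrow> Spow J w = (if w = J then 1 else 0)"
proof (induction J arbitrary: w)
  case Nil
  then show ?case by (simp add: Spow_def nsym_prod_def nsym_one_def)
next
  case (Cons k J)
  hence k: "k \<ge> 1" by auto
  show ?case
    using Cons k by (cases w) (auto simp: Spow_Cons S_mult_Nil S_mult_Cons S_Nil[OF k])
qed

lemma nsym_prod_append: "nsym_prod (xs @ ys) = nsym_mult (nsym_prod xs) (nsym_prod ys)"
  by (induction xs) (simp_all add: nsym_prod_def mult_one_left mult_assoc)

definition Up :: "nsym \<Rightarrow> nsym" where
  "Up f = (\<lambda>w. case w of [] \<Rightarrow> 0 | k # u \<Rightarrow> if k \<ge> 2 then f ((k - 1) # u) else 0)"

lemma Up_Nil[simp]: "Up f [] = 0" and Up_Cons: "Up f (k # u) = (if k \<ge> 2 then f ((k - 1) # u) else 0)"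
  by (simp_all add: Up_def)

lemma Up_mult: "f [] = 0 \<Longrightarrow> Up (nsym_mult f g) = nsym_mult (Up f) g"
proof
  fix w assume f0: "f [] = 0"
  show "Up (nsym_mult f g) w = nsym_mult (Up f) g w"
  proof (cases w)
    case Nil then show ?thesis by simp
  next
    case (Cons k u)
    have "(\<lambda>v. Up f (k # v)) = (if k \<ge> 2 then (\<lambda>v. f ((k - 1) # v)) else (\<lambda>v. 0))"
      by (auto simp: Up_Cons)
    then show ?thesis using f0 Cons
      by (simp add: Up_Cons mult_Cons mult_zero_left)
  qed
qed

lemma Up_S_mult: "k \<ge> 1 \<Longrightarrow> Up (nsym_mult (S k) f) = nsym_mult (S (Suc k)) f"
proof
  fix w assume k: "k \<ge> 1"
  show "Up (nsym_mult (S k) f) w = nsym_mult (S (Suc k)) f w"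
    using k by (cases w) (auto simp: Up_Cons S_mult_Cons S_mult_Nil S_Nil[of "Suc k"])
qed

lemma Up_sum: "Up (nsym_sum A F) = nsym_sum A (\<lambda>a. Up (F a))"
  by (rule ext) (auto simp: Up_def split: list.splits)

lemma Up_smult: "Up (nsym_smult c F) = nsym_smult c (Up F)"
  by (rule ext) (auto simp: Up_def split: list.splits)




section \<open>Binary trees\<close>

definition trees :: "nat \<Rightarrow> unit tree set" where
  "trees n = {t. size t = n}"

lemma trees_0: "trees 0 = {Leaf}"
  by (auto simp: trees_def)

lemma trees_Suc_bij:
  "bij_betw (\<lambda>(a, l, r). Node l () r) (SIGMA a:{..n}. trees a \<times> trees (n - a)) (trees (Suc n))"
proof (rule bij_betwI')
  fix x y assume "x \<in> (SIGMA a:{..n}. trees a \<times> trees (n - a))" "y \<in> (SIGMA a:{..n}. trees a \<times> trees (n - a))"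
  then show "((case x of (a, l, r) \<Rightarrow> \<langle>l, (), r\<rangle>) = (case y of (a, l, r) \<Rightarrow> \<langle>l, (), r\<rangle>)) = (x = y)"
    by (auto simp: trees_def)
next
  fix x assume "x \<in> (SIGMA a:{..n}. trees a \<times> trees (n - a))"
  then show "(case x of (a, l, r) \<Rightarrow> \<langle>l, (), r\<rangle>) \<in> trees (Suc n)"
    by (auto simp: trees_def)
next
  fix t assume "t \<in> trees (Suc n)"
  then obtain l r where t: "t = Node l () r" and s: "size l + size r = n"
    by (cases t) (auto simp: trees_def)
  show "\<exists>x\<in>SIGMA a:{..n}. trees a \<times> trees (n - a). t = (case x of (a, l, r) \<Rightarrow> \<langle>l, (), r\<rangle>)"
    by (rule bexI[of _ "(size l, l, r)"]) (use t s in \<open>auto simp: trees_def\<close>)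
qed

lemma finite_trees: "finite (trees n)"
proof (induction n rule: less_induct)
  case (less n)
  show ?case
  proof (cases n)
    case 0 then show ?thesis by (simp add: trees_0)
  next
    case (Suc m)
    have "finite (SIGMA a:{..m}. trees a \<times> trees (m - a))"
      using less Suc by (intro finite_SigmaI) auto
    then show ?thesis using bij_betw_finite[OF trees_Suc_bij[of m]] Suc by simp
  qed
qed

lemma sum_trees_Suc:
  "(\<Sum>t\<in>trees (Suc n). F t) = (\<Sum>a\<le>n. \<Sum>l\<in>trees a. \<Sum>r\<in>trees (n - a). F (Node l () r))"
proof -
  have "(\<Sum>t\<in>trees (Suc n). F t) = (\<Sum>x\<in>(SIGMA a:{..n}. trees a \<times> trees (n - a)). F (case x of (a, l, r) \<Rightarrow> Node l () r))"
    by (rule sum.reindex_bij_betw[OF trees_Suc_bij, symmetric])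
  also have "\<dots> = (\<Sum>a\<le>n. \<Sum>p\<in>trees a \<times> trees (n - a). F (Node (fst p) () (snd p)))"
    by (subst sum.Sigma) (auto simp: finite_trees split_def)
  also have "\<dots> = (\<Sum>a\<le>n. \<Sum>l\<in>trees a. \<Sum>r\<in>trees (n - a). F (Node l () r))"
    by (simp add: sum.cartesian_product split_def)
  finally show ?thesis .
qed

fun hk :: "unit tree \<Rightarrow> K" where
  "hk Leaf = 1"
| "hk (Node l x r) = (qq ^ (size l + size r + 1) - 1) * hk l * hk r"

lemma hk_nz: "hk t \<noteq> 0"
proof (induction t)
  case (Node l x r)
  then show ?case using qq_pow_m1_nz[of "size l + size r + 1"] by (simp del: power_Suc)
qed simp

fun code :: "unit tree \<Rightarrow> nat list" where
  "code Leaf = []"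
| "code (Node l x r) = code l @ code r @ [size r]"

definition rc :: "unit tree \<Rightarrow> nat list" where "rc t = rev (code t)"

lemma rc_Leaf[simp]: "rc Leaf = []" and rc_Node: "rc (Node l x r) = size r # rc r @ rc l"
  by (simp_all add: rc_def)

lemma length_code[simp]: "length (code t) = size t"
  by (induction t) auto

lemma length_rc[simp]: "length (rc t) = size t"
  by (simp add: rc_def)

lemma rc_Nil_iff: "rc t = [] \<longleftrightarrow> t = Leaf"
  using length_rc[of t] by (metis eq_size_0 length_0_conv)

lemma rc_last: "rc t = [] \<or> last (rc t) = 0"
proof (induction t)
  case (Node l x r)
  show ?case
  proof (cases "rc l = []")
    case False then show ?thesis using Node by (simp add: rc_Node)
  next
    case True
    show ?thesis
    proof (cases "rc r = []")
      case False then show ?thesis using Node True by (simp add: rc_Node)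
    next
      case True2: True
      then show ?thesis using True by (simp add: rc_Node rc_Nil_iff)
    qed
  qed
qed simp

section \<open>The S-expansion attached to an rc list\<close>

fun SWl :: "nat list \<Rightarrow> nsym" where
  "SWl xs [] = (if xs = [] then 1 else 0)"
| "SWl xs (k # w) = (if k = 0 \<or> k > length xs then 0
     else (\<Prod>i<k - 1. qq ^ (xs ! i) - 1) * SWl (drop k xs) w)"

lemma SWl_append_pt: "xs = [] \<or> last xs = 0 \<Longrightarrow> SWl (xs @ ys) w = nsym_mult (SWl xs) (SWl ys) w"
proof (induction w arbitrary: xs)
  case Nil
  then show ?case by simp
next
  case (Cons k w)
  show ?case
  proof (cases "xs = []")
    case True
    have "(\<lambda>u. SWl [] (k # u)) = (\<lambda>u. 0)" by auto
    then show ?thesis using True by (simp add: mult_Cons mult_zero_left)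
  next
    case False
    hence l0: "last xs = 0" using Cons.prems by simp
    show ?thesis
    proof (cases "k = 0 \<or> k > length xs")
      case True
      have z: "(\<lambda>u. SWl xs (k # u)) = (\<lambda>u. 0)" using True by auto
      have "SWl (xs @ ys) (k # w) = 0"
      proof (cases "k = 0 \<or> k > length (xs @ ys)")
        case True then show ?thesis by simp
      next
        case F2: False
        hence kk: "length xs - 1 < k - 1" using True False by (cases xs) auto
        have "(xs @ ys) ! (length xs - 1) = 0"
          using False l0 by (simp add: nth_append last_conv_nth)
        hence "(\<Prod>i<k - 1. qq ^ ((xs @ ys) ! i) - 1) = 0"
          using kk by (intro prod_zero bexI[of _ "length xs - 1"]) simp_all
        then show ?thesis by simp
      qed
      then show ?thesis using False z by (simp add: mult_Cons mult_zero_left)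
    next
      case kF: False
      define c where "c = (\<Prod>i<k - 1. qq ^ (xs ! i) - 1)"
      have z: "(\<lambda>u. SWl xs (k # u)) = nsym_smult c (SWl (drop k xs))"
        using kF by (auto simp: c_def nsym_smult_def)
      have dl: "drop k xs = [] \<or> last (drop k xs) = 0"
        using l0 by (cases "k < length xs") (auto simp: last_drop)
      have c2: "(\<Prod>i<k - 1. qq ^ ((xs @ ys) ! i) - 1) = c"
        unfolding c_def using kF by (intro prod.cong) (auto simp: nth_append)
      show ?thesis
        using False kF z c2 Cons.IH[OF dl] by (simp add: mult_Cons mult_smult_left)
    qed
  qed
qed

lemma SWl_append: "xs = [] \<or> last xs = 0 \<Longrightarrow> SWl (xs @ ys) = nsym_mult (SWl xs) (SWl ys)"
  using SWl_append_pt by blast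






lemma S_Suc_Nil[simp]: "S (Suc k) [] = 0" by (simp add: S_def)

lemma SWl_Cons: "SWl (x # ys) = (\<lambda>w. nsym_mult (S 1) (SWl ys) w + (qq ^ x - 1) * Up (SWl ys) w)"
proof
  fix w show "SWl (x # ys) w = nsym_mult (S 1) (SWl ys) w + (qq ^ x - 1) * Up (SWl ys) w"
  proof (cases w)
    case Nil then show ?thesis by (simp add: S_mult_Nil S_Nil[of 1])
  next
    case (Cons k u)
    show ?thesis
    proof (cases "k = 0 \<or> k = 1")
      case True then show ?thesis using Cons by (auto simp: S_mult_Cons Up_Cons)
    next
      case False
      then obtain j where k: "k = Suc (Suc j)" by (metis One_nat_def not0_implies_Suc)
      show ?thesis using Cons k
        by (simp add: S_mult_Cons Up_Cons prod.lessThan_Suc_shift del: prod.lessThan_Suc)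
    qed
  qed
qed

definition Phi :: "nat \<Rightarrow> nsym" where
  "Phi n = nsym_sum (trees n) (\<lambda>t. nsym_smult (inverse (hk t)) (SWl (rc t)))"

lemma SWl_Nil_Cons[simp]: "SWl [] (k # w) = 0" by auto

lemma Phi_0: "Phi 0 = nsym_one"
proof
  fix x show "Phi 0 x = nsym_one x" by (cases x) (auto simp: Phi_def trees_0)
qed

lemma Phi_Nil_pos: "n \<ge> 1 \<Longrightarrow> Phi n [] = 0"
  by (auto simp: Phi_def trees_def rc_Nil_iff intro!: sum.neutral)

lemma Phi_Suc_pt:
  "(qq ^ Suc n - 1) * Phi (Suc n) w =
   (\<Sum>a\<le>n. nsym_mult (S 1) (nsym_mult (Phi (n - a)) (Phi a)) w
        + Up (nsym_mult (nsym_smult (qq ^ (n - a) - 1) (Phi (n - a))) (Phi a)) w)"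
proof -
  define A where "A l r = nsym_mult (SWl (rc r)) (SWl (rc l))" for l r
  have node: "(qq ^ Suc n - 1) * (inverse (hk (Node l () r)) * SWl (rc (Node l () r)) w) =
      inverse (hk l) * inverse (hk r) * (nsym_mult (S 1) (A l r) w + (qq ^ (n - a) - 1) * Up (A l r) w)"
    if "l \<in> trees a" "r \<in> trees (n - a)" "a \<le> n" for l r a
  proof -
    have sz: "size l + size r + 1 = Suc n" "size r = n - a" using that by (auto simp: trees_def)
    have "SWl (rc (Node l () r)) = SWl (size r # (rc r @ rc l))" by (simp add: rc_Node)
    also have "\<dots> = (\<lambda>w. nsym_mult (S 1) (A l r) w + (qq ^ size r - 1) * Up (A l r) w)"
      by (simp add: SWl_Cons A_def SWl_append[OF rc_last])
    finally have e: "SWl (rc (Node l () r)) w = nsym_mult (S 1) (A l r) w + (qq ^ (n - a) - 1) * Up (A l r) w"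
      using sz by simp
    have h: "hk (Node l () r) = (qq ^ Suc n - 1) * hk l * hk r" using sz by (simp del: power_Suc)
    show ?thesis unfolding h e using qq_pow_m1_nz[of "Suc n"] hk_nz[of l] hk_nz[of r]
      by (simp add: field_simps del: power_Suc)
  qed
  have "(qq ^ Suc n - 1) * Phi (Suc n) w =
     (\<Sum>a\<le>n. \<Sum>l\<in>trees a. \<Sum>r\<in>trees (n - a). (qq ^ Suc n - 1) * (inverse (hk (Node l () r)) * SWl (rc (Node l () r)) w))"
    by (simp add: Phi_def sum_trees_Suc sum_distrib_left)
  also have "\<dots> = (\<Sum>a\<le>n. \<Sum>l\<in>trees a. \<Sum>r\<in>trees (n - a).
        inverse (hk l) * inverse (hk r) * (nsym_mult (S 1) (A l r) w + (qq ^ (n - a) - 1) * Up (A l r) w))"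
    by (intro sum.cong refl node) auto
  also have "\<dots> = (\<Sum>a\<le>n. nsym_mult (S 1) (nsym_mult (Phi (n - a)) (Phi a)) w
        + Up (nsym_mult (nsym_smult (qq ^ (n - a) - 1) (Phi (n - a))) (Phi a)) w)"
  proof (intro sum.cong refl)
    fix a assume a: "a \<in> {..n}"
    have PP: "nsym_mult (Phi (n - a)) (Phi a) = nsym_sum (trees (n - a)) (\<lambda>r. nsym_sum (trees a)
         (\<lambda>l. nsym_smult (inverse (hk r) * inverse (hk l)) (A l r)))"
      apply (rule ext)
      apply (simp add: Phi_def A_def mult_sum_left mult_sum_right finite_trees
          mult_smult_left mult_smult_right sum_distrib_left mult.assoc)
      apply (subst sum.swap)
      apply (simp add: mult.left_commute)
      done
    have e1: "nsym_mult (S 1) (nsym_mult (Phi (n - a)) (Phi a)) w =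
        (\<Sum>r\<in>trees (n - a). \<Sum>l\<in>trees a. inverse (hk r) * inverse (hk l) * nsym_mult (S 1) (A l r) w)"
      unfolding PP by (simp add: mult_sum_right finite_trees mult_smult_right)
    have e2: "Up (nsym_mult (nsym_smult (qq ^ (n - a) - 1) (Phi (n - a))) (Phi a)) w =
        (\<Sum>r\<in>trees (n - a). \<Sum>l\<in>trees a. inverse (hk r) * inverse (hk l) * ((qq ^ (n - a) - 1) * Up (A l r) w))"
      unfolding mult_smult_left PP Up_smult Up_sum
      by (simp add: Up_smult Up_sum sum_distrib_left algebra_simps)
    show "(\<Sum>l\<in>trees a. \<Sum>r\<in>trees (n - a). inverse (hk l) * inverse (hk r) *
          (nsym_mult (S 1) (A l r) w + (qq ^ (n - a) - 1) * Up (A l r) w)) =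
        nsym_mult (S 1) (nsym_mult (Phi (n - a)) (Phi a)) w +
        Up (nsym_mult (nsym_smult (qq ^ (n - a) - 1) (Phi (n - a))) (Phi a)) w"
      unfolding e1 e2 sum.distrib[symmetric]
      by (subst sum.swap) (simp add: algebra_simps)
  qed
  finally show ?thesis .
qed




lemma finite_wcomps: "finite (wcomps k m)"
proof (rule finite_subset)
  show "wcomps k m \<subseteq> {xs. set xs \<subseteq> {..m} \<and> length xs = k}"
    by (auto simp: wcomps_def member_le_sum_list)
  show "finite {xs. set xs \<subseteq> {..m} \<and> length xs = k}"
    by (rule finite_lists_length_eq) simp
qed

lemma wcomps_1: "wcomps 1 x = {[x]}"
  by (auto simp: wcomps_def length_Suc_conv)

lemma wcomps_Suc0: "wcomps (Suc 0) x = {[x]}"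
  using wcomps_1 by simp

lemma wcomps_bij:
  "bij_betw (\<lambda>(a, js). js @ [a]) (SIGMA a:{..N}. wcomps k (N - a)) (wcomps (Suc k) N)"
proof (rule bij_betwI')
  fix x y assume "x \<in> (SIGMA a:{..N}. wcomps k (N - a))" "y \<in> (SIGMA a:{..N}. wcomps k (N - a))"
  then show "((case x of (a, js) \<Rightarrow> js @ [a]) = (case y of (a, js) \<Rightarrow> js @ [a])) = (x = y)"
    by (auto simp: wcomps_def)
next
  fix x assume "x \<in> (SIGMA a:{..N}. wcomps k (N - a))"
  then show "(case x of (a, js) \<Rightarrow> js @ [a]) \<in> wcomps (Suc k) N"
    by (auto simp: wcomps_def)
next
  fix js assume js: "js \<in> wcomps (Suc k) N"
  hence ne: "js \<noteq> []" by (auto simp: wcomps_def)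
  hence e: "js = butlast js @ [last js]" by simp
  have "sum_list js = sum_list (butlast js) + last js" by (subst e) simp
  then show "\<exists>x\<in>SIGMA a:{..N}. wcomps k (N - a). js = (case x of (a, js) \<Rightarrow> js @ [a])"
    using js e by (intro bexI[of _ "(last js, butlast js)"]) (auto simp: wcomps_def)
qed

lemma sum_wcomps_Suc:
  "(\<Sum>js\<in>wcomps (Suc k) N. F js) = (\<Sum>a\<le>N. \<Sum>js\<in>wcomps k (N - a). F (js @ [a]))"
proof -
  have "(\<Sum>js\<in>wcomps (Suc k) N. F js) = (\<Sum>x\<in>(SIGMA a:{..N}. wcomps k (N - a)). F (case x of (a, js) \<Rightarrow> js @ [a]))"
    by (rule sum.reindex_bij_betw[OF wcomps_bij, symmetric])
  also have "\<dots> = (\<Sum>a\<le>N. \<Sum>js\<in>wcomps k (N - a). F (js @ [a]))"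
    by (subst sum.Sigma) (auto simp: finite_wcomps split_def)
  finally show ?thesis .
qed

definition Pw :: "nat \<Rightarrow> nat \<Rightarrow> nsym" where
  "Pw n k = nsym_sum (wcomps (k + 1) (n - k)) (\<lambda>js. nsym_prod (map Phi js))"

definition T :: "nat \<Rightarrow> nsym" where
  "T n = nsym_sum {1..n} (\<lambda>k. nsym_mult (S k) (Pw n k))"

lemma T_Nil: "T n [] = 0"
  by (auto simp: T_def S_Nil intro!: sum.neutral)

lemma T_Cons: "T n (k # w) = (if 1 \<le> k \<and> k \<le> n then Pw n k w else 0)"
proof -
  have "T n (k # w) = (\<Sum>j\<in>{1..n}. if k = j then Pw n j w else 0)"
    unfolding T_def nsym_sum_apply by (intro sum.cong refl) (auto simp: S_mult_Cons)
  also have "\<dots> = (if 1 \<le> k \<and> k \<le> n then Pw n k w else 0)"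
    by (subst sum.delta') auto
  finally show ?thesis .
qed

lemma prod_Phi_snoc: "nsym_prod (map Phi (js @ [a])) = nsym_mult (nsym_prod (map Phi js)) (Phi a)"
  unfolding map_append nsym_prod_append by (simp add: nsym_prod_def mult_one_right)

lemma Pw_mult: "nsym_mult (Pw b k) (Phi a) =
    nsym_sum (wcomps (k + 1) (b - k)) (\<lambda>js. nsym_prod (map Phi (js @ [a])))"
  unfolding Pw_def prod_Phi_snoc by (simp add: mult_sum_left finite_wcomps)

lemma UpT_mult_Cons: "nsym_mult (Up (T b)) (Phi a) (k # u) =
   (if 2 \<le> k \<and> k - 1 \<le> b then nsym_mult (Pw b (k - 1)) (Phi a) u else 0)"
proof -
  have "(\<lambda>v. Up (T b) (k # v)) = (if 2 \<le> k \<and> k - 1 \<le> b then Pw b (k - 1) else (\<lambda>v. 0))"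
    by (auto simp: Up_Cons T_Cons)
  then show ?thesis by (simp add: mult_Cons mult_zero_left)
qed

lemma Up_T_mult: "Up (nsym_mult (T b) f) = nsym_mult (Up (T b)) f"
  by (rule Up_mult) (simp add: T_Nil)

lemma Phi_T: "nsym_smult (qq ^ n - 1) (Phi n) = T n"
proof (induction n rule: less_induct)
  case (less n)
  show ?case
  proof (cases n)
    case 0
    then show ?thesis by (rule_tac ext) (simp add: T_def)
  next
    case (Suc m)
    have IH: "nsym_smult (qq ^ (m - a) - 1) (Phi (m - a)) = T (m - a)" for a
    proof -
      have "m - a < n" using Suc by simp
      from less.IH[OF this] show ?thesis .
    qed
    have T0: "T b [] = 0" for b by (simp add: T_Nil)
    show ?thesis
    proof
      fix w
      have L: "nsym_smult (qq ^ n - 1) (Phi n) w = (\<Sum>a\<le>m. nsym_mult (S 1) (nsym_mult (Phi (m - a)) (Phi a)) w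
          + nsym_mult (Up (T (m - a))) (Phi a) w)"
        unfolding Suc nsym_smult_apply Phi_Suc_pt IH Up_T_mult ..
      show "nsym_smult (qq ^ n - 1) (Phi n) w = T n w"
      proof (cases w)
        case Nil
        then show ?thesis unfolding L by (simp add: S_mult_Nil T_Nil)
      next
        case (Cons k u)
        show ?thesis
        proof (cases "k = 0")
          case True
          then show ?thesis unfolding L unfolding Cons by (simp add: S_mult_Cons UpT_mult_Cons T_Cons)
        next
          case k0: False
          show ?thesis
          proof (cases "k = 1")
            case True
            have "T n w = Pw (Suc m) 1 u" using Cons True Suc by (simp add: T_Cons)
            also have "\<dots> = (\<Sum>js\<in>wcomps (Suc 1) m. nsym_prod (map Phi js) u)"
              by (simp add: Pw_def)
            also have "\<dots> = (\<Sum>a\<le>m. \<Sum>js\<in>wcomps 1 (m - a). nsym_prod (map Phi (js @ [a])) u)"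
              by (rule sum_wcomps_Suc)
            also have "\<dots> = (\<Sum>a\<le>m. nsym_mult (Phi (m - a)) (Phi a) u)"
              by (simp add: wcomps_Suc0 nsym_prod_def mult_one_right)
            finally have R: "T n w = (\<Sum>a\<le>m. nsym_mult (Phi (m - a)) (Phi a) u)" .
            show ?thesis unfolding L R unfolding Cons using True
              by (simp add: S_mult_Cons UpT_mult_Cons)
          next
            case k1: False
            hence k2: "k \<ge> 2" using k0 by simp
            have L2: "nsym_smult (qq ^ n - 1) (Phi n) w =
                (\<Sum>a\<le>m. if k - 1 \<le> m - a then
                   (\<Sum>js\<in>wcomps k (m - a - (k - 1)). nsym_prod (map Phi (js @ [a])) u) else 0)"
              unfolding L unfolding Cons using k2
              by (intro sum.cong refl) (simp add: S_mult_Cons UpT_mult_Cons Pw_mult)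
            show ?thesis
            proof (cases "k \<le> Suc m")
              case False
              have "nsym_smult (qq ^ n - 1) (Phi n) w = 0" unfolding L2
                using False by (intro sum.neutral) auto
              moreover have "T n w = 0" using False Cons Suc by (simp add: T_Cons)
              ultimately show ?thesis by simp
            next
              case True
              define N where "N = Suc m - k"
              have "T n w = Pw (Suc m) k u" using Cons True Suc k2 by (simp add: T_Cons)
              also have "\<dots> = (\<Sum>a\<le>N. \<Sum>js\<in>wcomps k (N - a). nsym_prod (map Phi (js @ [a])) u)"
                unfolding Pw_def N_def by (simp add: sum_wcomps_Suc)
              also have "\<dots> = (\<Sum>a\<le>m. if k - 1 \<le> m - a then
                   (\<Sum>js\<in>wcomps k (m - a - (k - 1)). nsym_prod (map Phi (js @ [a])) u) else 0)"
              proof -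
                have eqN: "m - a - (k - 1) = Suc m - k - a" for a using k2 by simp
                have sub: "{..N} \<subseteq> {..m}" using k2 by (auto simp: N_def)
                have "(\<Sum>a\<le>m. if k - 1 \<le> m - a then
                   (\<Sum>js\<in>wcomps k (m - a - (k - 1)). nsym_prod (map Phi (js @ [a])) u) else 0)
                   = (\<Sum>a\<le>N. if k - 1 \<le> m - a then
                   (\<Sum>js\<in>wcomps k (m - a - (k - 1)). nsym_prod (map Phi (js @ [a])) u) else 0)"
                  using sub True k2 by (intro sum.mono_neutral_right) (auto simp: N_def)
                also have "\<dots> = (\<Sum>a\<le>N. \<Sum>js\<in>wcomps k (N - a). nsym_prod (map Phi (js @ [a])) u)"
                  using True k2 by (intro sum.cong refl) (simp add: N_def eqN add.commute)
                finally show ?thesis by simp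
              qed
              finally show ?thesis using L2 by simp
            qed
          qed
        qed
      qed
    qed
  qed
qed

lemma g_eq_Phi:
  assumes g0: "g 0 = nsym_one"
    and grec: "\<And>m. m \<ge> 1 \<Longrightarrow>
        nsym_smult (qq ^ m - 1) (g m) =
        nsym_sum {1..m} (\<lambda>k. nsym_mult (S k)
           (nsym_sum (wcomps (k + 1) (m - k)) (\<lambda>js. nsym_prod (map g js))))"
  shows "g n = Phi n"
proof (induction n rule: less_induct)
  case (less n)
  show ?case
  proof (cases "n = 0")
    case True then show ?thesis using g0 Phi_0 by simp
  next
    case False
    have eqm: "nsym_prod (map g js) = nsym_prod (map Phi js)" if "js \<in> wcomps (k + 1) (n - k)" "k \<in> {1..n}" for js k
    proof -
      have "\<forall>j\<in>set js. j < n" using that member_le_sum_list[of _ js] by (fastforce simp: wcomps_def)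
      then have "map g js = map Phi js" using less by (intro map_cong) auto
      then show ?thesis by (rule arg_cong)
    qed
    have G: "nsym_smult (qq ^ n - 1) (g n) = nsym_sum {1..n} (\<lambda>k. nsym_mult (S k)
           (nsym_sum (wcomps (k + 1) (n - k)) (\<lambda>js. nsym_prod (map g js))))"
      using grec[of n] False by simp
    have "nsym_smult (qq ^ n - 1) (g n) = T n"
    proof -
      have eqs: "nsym_sum (wcomps (k + 1) (n - k)) (\<lambda>js. nsym_prod (map g js)) =
          nsym_sum (wcomps (k + 1) (n - k)) (\<lambda>js. nsym_prod (map Phi js))" if "k \<in> {1..n}" for k
        unfolding nsym_sum_def using that by (intro ext sum.cong refl) (simp add: eqm)
      show ?thesis unfolding G T_def Pw_def
        apply (rule ext)
        apply (simp only: nsym_sum_apply)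
        apply (rule sum.cong[OF refl])
        apply (simp only: eqs)
        done
    qed
    also have "\<dots> = nsym_smult (qq ^ n - 1) (Phi n)" by (rule Phi_T[symmetric])
    finally have e: "nsym_smult (qq ^ n - 1) (g n) = nsym_smult (qq ^ n - 1) (Phi n)" .
    show ?thesis
    proof
      fix w
      have "(qq ^ n - 1) * g n w = (qq ^ n - 1) * Phi n w" using fun_cong[OF e, of w] by simp
      then show "g n w = Phi n w" using qq_pow_m1_nz[OF False] by simp
    qed
  qed
qed




section \<open>Inversions\<close>

lemma invs_Nil: "invs [] = 0" by (simp add: invs_def)

lemma invs_Cons: "invs (x # w) = length (filter (\<lambda>y. y < x) w) + invs w"
proof -
  let ?A = "(\<lambda>j. (0::nat, Suc j)) ` {j. j < length w \<and> w ! j < x}"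
  let ?B = "(\<lambda>(i, j). (Suc i, Suc j)) ` {(i, j). i < j \<and> j < length w \<and> w ! j < w ! i}"
  have e: "{(i, j). i < j \<and> j < length (x # w) \<and> (x # w) ! j < (x # w) ! i} = ?A \<union> ?B"
  proof (rule set_eqI, clarify)
    fix i j
    show "((i, j) \<in> {(i, j). i < j \<and> j < length (x # w) \<and> (x # w) ! j < (x # w) ! i}) = ((i, j) \<in> ?A \<union> ?B)"
      by (cases i; cases j) auto
  qed
  have d: "?A \<inter> ?B = {}" by auto
  have fA: "finite ?A" by simp
  have fB: "finite ?B"
    by (rule finite_imageI, rule finite_subset[of _ "{..<length w} \<times> {..<length w}"]) auto
  have cA: "card ?A = length (filter (\<lambda>y. y < x) w)"
    by (subst card_image) (auto simp: inj_on_def length_filter_conv_card)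
  have cB: "card ?B = card {(i, j). i < j \<and> j < length w \<and> w ! j < w ! i}"
    by (subst card_image) (auto simp: inj_on_def)
  show ?thesis unfolding invs_def[of "x # w"] e
    by (subst card_Un_disjoint[OF fA fB d]) (simp add: cA cB invs_def)
qed

fun crs :: "nat list \<Rightarrow> nat list \<Rightarrow> nat" where
  "crs [] v = 0"
| "crs (x # u) v = length (filter (\<lambda>y. y < x) v) + crs u v"

lemma invs_append: "invs (u @ v) = invs u + invs v + crs u v"
  by (induction u) (simp_all add: invs_Nil invs_Cons)

definition crsS :: "nat set \<Rightarrow> nat set \<Rightarrow> nat" where
  "crsS A B = card {(x, y). x \<in> A \<and> y \<in> B \<and> y < x}"

lemma crsS_empty: "crsS {} B = 0" by (simp add: crsS_def)

lemma crsS_insert: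
  assumes "finite A" "finite B" "x \<notin> A"
  shows "crsS (insert x A) B = card {y \<in> B. y < x} + crsS A B"
proof -
  have e: "{(z, y). z \<in> insert x A \<and> y \<in> B \<and> y < z} = (\<lambda>y. (x, y)) ` {y \<in> B. y < x} \<union> {(z, y). z \<in> A \<and> y \<in> B \<and> y < z}"
    by auto
  have f2: "finite {(z, y). z \<in> A \<and> y \<in> B \<and> y < z}"
    by (rule finite_subset[of _ "A \<times> B"]) (use assms in auto)
  show ?thesis unfolding crsS_def e
    by (subst card_Un_disjoint) (use assms f2 in \<open>auto simp: card_image inj_on_def\<close>)
qed

lemma crs_crsS: "distinct u \<Longrightarrow> distinct v \<Longrightarrow> crs u v = crsS (set u) (set v)"
proof (induction u)
  case Nil then show ?case by (simp add: crsS_empty)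
next
  case (Cons x u)
  have "length (filter (\<lambda>y. y < x) v) = card {y \<in> set v. y < x}"
    using Cons.prems by (simp add: distinct_length_filter Int_def conj_commute)
  then show ?case using Cons by (simp add: crsS_insert)
qed

lemma crsS_zero_iff:
  assumes "finite A" "finite B"
  shows "crsS A B = 0 \<longleftrightarrow> (\<forall>x\<in>A. \<forall>y\<in>B. x \<le> y)"
proof -
  have "finite {(x, y). x \<in> A \<and> y \<in> B \<and> y < x}"
    by (rule finite_subset[of _ "A \<times> B"]) (use assms in auto)
  then show ?thesis unfolding crsS_def by (auto simp: not_less)
qed

section \<open>Decreasing trees\<close>

lemma dtree_split:
  assumes "distinct (u @ m # v)" "\<forall>x\<in>set u. x < m" "\<forall>x\<in>set v. x < m"
  shows "dtree (u @ m # v) = Node (dtree u) m (dtree v)"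
proof -
  obtain y ys where yy: "u @ m # v = y # ys" by (cases u) auto
  have mx: "Max (set (u @ m # v)) = m"
    using assms by (intro Max_eqI) auto
  have nu: "m \<notin> set u" using assms by auto
  have tw: "takeWhile (\<lambda>y. y \<noteq> m) (u @ m # v) = u"
    using nu by (induction u) auto
  have dw: "tl (dropWhile (\<lambda>y. y \<noteq> m) (u @ m # v)) = v"
    using nu by (induction u) auto
  show ?thesis
    using mx tw dw unfolding yy by (simp add: Let_def)
qed

lemma word_split:
  assumes "distinct w" "w \<noteq> []"
  obtains u v where "w = u @ Max (set w) # v" "\<forall>x\<in>set u. x < Max (set w)" "\<forall>x\<in>set v. x < Max (set w)"
proof -
  have "Max (set w) \<in> set w" using assms by simp
  then obtain u v where w: "w = u @ Max (set w) # v" by (meson split_list)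
  have d: "distinct (u @ Max (set w) # v)" using assms(1) w by simp
  hence n: "Max (set w) \<notin> set u" "Max (set w) \<notin> set v" by auto
  have le: "x \<le> Max (set w)" if "x \<in> set w" for x using that by simp
  have lt: "x < Max (set w)" if "x \<in> set u \<union> set v" for x
  proof -
    have "x \<in> set w" using that by (subst w) auto
    then have "x \<le> Max (set w)" by (rule le)
    moreover have "x \<noteq> Max (set w)" using that n by auto
    ultimately show ?thesis by simp
  qed
  have "\<forall>x\<in>set u. x < Max (set w)" "\<forall>x\<in>set v. x < Max (set w)"
    using lt by auto
  then show ?thesis using that w by blast
qed

lemma size_dtree: "distinct w \<Longrightarrow> size (dtree w) = length w"
proof (induction "length w" arbitrary: w rule: less_induct)
  case less
  show ?case
  proof (cases "w = []")
    case True then show ?thesis by simp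
  next
    case False
    obtain u v where w: "w = u @ Max (set w) # v" "\<forall>x\<in>set u. x < Max (set w)" "\<forall>x\<in>set v. x < Max (set w)"
      using word_split[OF less.prems False] by blast
    have dt: "dtree w = Node (dtree u) (Max (set w)) (dtree v)"
      using w less.prems dtree_split by metis
    have du: "distinct u" "distinct v" using less.prems w(1) by (metis distinct_append distinct.simps(2))+
    have lu: "length u < length w" "length v < length w" using w(1) by (metis length_append length_Cons less_add_Suc1 add_Suc_right trans_less_add1 less_add_Suc2)+
    have "size (dtree u) = length u" "size (dtree v) = length v"
      using less.hyps[OF lu(1) du(1)] less.hyps[OF lu(2) du(2)] by simp_all
    moreover have "length w = length u + length v + 1" by (subst w(1)) simp
    ultimately show ?thesis unfolding dt by simp
  qed
qed

lemma shape_Node: "shape (Node l m r) = Node (shape l) () (shape r)"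
  by (simp add: shape_def)

lemma shape_Leaf: "shape Leaf = Leaf"
  by (simp add: shape_def)

lemma size_shape: "size (shape t) = size t"
  by (simp add: shape_def)




definition Gs :: "nat set \<Rightarrow> nat \<Rightarrow> K" where
  "Gs Y a = (\<Sum>A\<in>{A. A \<subseteq> Y \<and> card A = a}. qq ^ crsS A (Y - A))"

lemma Gs_0: "finite Y \<Longrightarrow> Gs Y 0 = 1"
proof -
  assume f: "finite Y"
  have "{A. A \<subseteq> Y \<and> card A = 0} = {{}}" using f by (auto dest: finite_subset)
  then show ?thesis by (simp add: Gs_def crsS_empty)
qed

lemma Gs_full: "finite Y \<Longrightarrow> Gs Y (card Y) = 1"
proof -
  assume f: "finite Y"
  have "{A. A \<subseteq> Y \<and> card A = card Y} = {Y}" using f by (auto dest: card_subset_eq)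
  moreover have "crsS Y {} = 0" by (simp add: crsS_def)
  ultimately show ?thesis by (simp add: Gs_def)
qed

lemma Gs_split:
  assumes f: "finite Y" and y: "y \<in> Y" and ymax: "\<forall>z\<in>Y. z \<le> y" and a: "0 < a" "a < card Y"
  shows "Gs Y a = qq ^ (card Y - a) * Gs (Y - {y}) (a - 1) + Gs (Y - {y}) a"
proof -
  let ?Y' = "Y - {y}"
  let ?S1 = "{A. A \<subseteq> ?Y' \<and> card A = a - 1}"
  let ?S2 = "{A. A \<subseteq> ?Y' \<and> card A = a}"
  have fY': "finite ?Y'" using f by simp
  have cY': "card ?Y' = card Y - 1" using f y by simp
  have e: "{A. A \<subseteq> Y \<and> card A = a} = insert y ` ?S1 \<union> ?S2"
  proof (rule set_eqI, rule iffI)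
    fix A assume A: "A \<in> {A. A \<subseteq> Y \<and> card A = a}"
    show "A \<in> insert y ` ?S1 \<union> ?S2"
    proof (cases "y \<in> A")
      case True
      have "A - {y} \<in> ?S1" using A True f by (auto dest: finite_subset)
      moreover have "A = insert y (A - {y})" using True by auto
      ultimately show ?thesis by blast
    next
      case False then show ?thesis using A by auto
    qed
  next
    fix A assume A: "A \<in> insert y ` ?S1 \<union> ?S2"
    show "A \<in> {A. A \<subseteq> Y \<and> card A = a}"
    proof (cases "A \<in> ?S2")
      case True then show ?thesis by auto
    next
      case False
      then obtain B where B: "B \<in> ?S1" "A = insert y B" using A by auto
      have "finite B" using B fY' by (auto dest: finite_subset)
      moreover have "y \<notin> B" using B by auto
      ultimately show ?thesis using B y a by auto
    qed
  qed
  have fS1: "finite ?S1" "finite ?S2" using fY' by (auto intro: finite_subset[of _ "Pow ?Y'"])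
  have d: "insert y ` ?S1 \<inter> ?S2 = {}" by auto
  have inj: "inj_on (insert y) ?S1"
    unfolding inj_on_def by (metis (no_types, lifting) Diff_insert_absorb mem_Collect_eq subset_Diff_insert)
  have t1: "qq ^ crsS (insert y B) (Y - insert y B) = qq ^ (card Y - a) * qq ^ crsS B (?Y' - B)" if B: "B \<in> ?S1" for B
  proof -
    have fB: "finite B" using B fY' by (auto dest: finite_subset)
    have yB: "y \<notin> B" using B by auto
    have e1: "Y - insert y B = ?Y' - B" by auto
    have e2: "{z \<in> ?Y' - B. z < y} = ?Y' - B" using ymax by force
    have c: "card (?Y' - B) = card Y - a" using B fB cY' a by (simp add: card_Diff_subset)
    have "crsS (insert y B) (Y - insert y B) = card Y - a + crsS B (?Y' - B)"
      unfolding e1 by (subst crsS_insert) (use fB yB fY' e2 c in auto)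
    then show ?thesis by (simp add: power_add)
  qed
  have t2: "crsS A (Y - A) = crsS A (?Y' - A)" if A: "A \<in> ?S2" for A
  proof -
    have "{(x, z). x \<in> A \<and> z \<in> Y - A \<and> z < x} = {(x, z). x \<in> A \<and> z \<in> ?Y' - A \<and> z < x}"
      using A ymax by fastforce
    then show ?thesis by (simp add: crsS_def)
  qed
  have "Gs Y a = (\<Sum>A\<in>insert y ` ?S1. qq ^ crsS A (Y - A)) + (\<Sum>A\<in>?S2. qq ^ crsS A (Y - A))"
    unfolding Gs_def e by (rule sum.union_disjoint) (use fS1 d in auto)
  also have "(\<Sum>A\<in>insert y ` ?S1. qq ^ crsS A (Y - A)) = (\<Sum>B\<in>?S1. qq ^ (card Y - a) * qq ^ crsS B (?Y' - B))"
    by (subst sum.reindex[OF inj]) (rule sum.cong, simp_all only: o_def t1)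
  also have "\<dots> = qq ^ (card Y - a) * Gs ?Y' (a - 1)"
    by (simp add: Gs_def sum_distrib_left)
  also have "(\<Sum>A\<in>?S2. qq ^ crsS A (Y - A)) = Gs ?Y' a"
    unfolding Gs_def by (rule sum.cong) (simp_all add: t2)
  finally show ?thesis .
qed

lemma gauss:
  "finite Y \<Longrightarrow> a \<le> card Y \<Longrightarrow> Gs Y a * qpoch a * qpoch (card Y - a) = qpoch (card Y)"
proof (induction "card Y" arbitrary: Y a)
  case 0
  then show ?case by (simp add: Gs_0 qpoch_0)
next
  case (Suc n')
  show ?case
  proof (cases "a = 0")
    case True then show ?thesis using Suc by (simp add: Gs_0 qpoch_0)
  next
    case a0: False
    show ?thesis
    proof (cases "a = card Y")
      case True then show ?thesis using Suc by (simp add: Gs_full qpoch_0)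
    next
      case False
      hence aY: "a < card Y" using Suc by simp
      have Yne: "Y \<noteq> {}" using Suc by auto
      define y where "y = Max Y"
      have y: "y \<in> Y" "\<forall>z\<in>Y. z \<le> y" using Yne Suc.prems by (auto simp: y_def)
      have cY': "card (Y - {y}) = n'" using Suc y by simp
      obtain a' where a': "a = Suc a'" using a0 by (cases a) auto
      obtain d' where d': "n' = a' + Suc d'" using aY a' Suc.hyps(2) by (metis add_Suc_right less_Suc_eq_le less_imp_Suc_add Suc_less_eq)
      have IH1: "Gs (Y - {y}) a' * qpoch a' * qpoch (Suc d') = qpoch n'"
        using Suc.hyps(1)[of "Y - {y}" a'] cY' Suc.prems d' by simp
      have IH2: "Gs (Y - {y}) a * qpoch a * qpoch d' = qpoch n'"
        using Suc.hyps(1)[of "Y - {y}" a] cY' Suc.prems d' a' by simp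
      have cYa: "card Y - a = Suc d'" using Suc.hyps(2) a' d' by simp
      have sp: "Gs Y a = qq ^ Suc d' * Gs (Y - {y}) a' + Gs (Y - {y}) a"
        using Gs_split[OF Suc.prems(1) y(1) y(2) _ aY] a' cYa by simp
      have pw: "qq ^ Suc d' * qq ^ Suc a' = qq ^ Suc n'" unfolding power_add[symmetric] by (rule arg_cong[where f="(^) qq"]) (use d' in simp)
      have "Gs Y a * qpoch a * qpoch (card Y - a) =
          qq ^ Suc d' * (qq ^ Suc a' - 1) * (Gs (Y - {y}) a' * qpoch a' * qpoch (Suc d'))
          + (qq ^ Suc d' - 1) * (Gs (Y - {y}) a * qpoch a * qpoch d')"
        unfolding cYa sp unfolding a' by (simp add: qpoch_Suc algebra_simps del: power_Suc)
      also have "\<dots> = qpoch n' * (qq ^ Suc d' * qq ^ Suc a' - 1)"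
        unfolding IH1 IH2 by (simp add: algebra_simps del: power_Suc)
      also have "\<dots> = qpoch (card Y)"
        unfolding pw Suc.hyps(2)[symmetric] by (simp add: qpoch_Suc del: power_Suc)
      finally show ?thesis .
    qed
  qed
qed




fun mn :: "unit tree \<Rightarrow> nat" where
  "mn Leaf = 0"
| "mn (Node l x r) = mn l + mn r + size r"

definition Wd :: "nat set \<Rightarrow> unit tree \<Rightarrow> nat list set" where
  "Wd X t = {w. distinct w \<and> set w = X \<and> shape (dtree w) = t}"

lemma crs_Cons_big: "\<forall>x\<in>set u. x < m \<Longrightarrow> crs u (m # v) = crs u v"
  by (induction u) auto

lemma invs_split: "\<forall>x\<in>set u. x < m \<Longrightarrow> \<forall>x\<in>set v. x < m \<Longrightarrow>
   invs (u @ m # v) = invs u + invs v + length v + crs u v"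
proof -
  assume u: "\<forall>x\<in>set u. x < m" and v: "\<forall>x\<in>set v. x < m"
  have "filter (\<lambda>y. y < m) v = v" using v by (induction v) auto
  then show ?thesis using u by (simp add: invs_append invs_Cons crs_Cons_big)
qed

lemma split_unique:
  assumes "u @ m # v = u' @ m # v'" "m \<notin> set u" "m \<notin> set u'"
  shows "u = u' \<and> v = v'"
proof -
  have "takeWhile (\<lambda>y. y \<noteq> m) (u @ m # v) = u" using assms(2) by (induction u) auto
  moreover have "takeWhile (\<lambda>y. y \<noteq> m) (u' @ m # v') = u'" using assms(3) by (induction u') auto
  ultimately have "u = u'" using assms(1) by simp
  then show ?thesis using assms(1) by simp
qed

lemma dtree_Nil_iff: "dtree w = Leaf \<longleftrightarrow> w = []"
  by (cases w) (simp_all add: Let_def)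

lemma mn_le_invs: "distinct w \<Longrightarrow> mn (shape (dtree w)) \<le> invs w"
proof (induction "length w" arbitrary: w rule: less_induct)
  case less
  show ?case
  proof (cases "w = []")
    case True then show ?thesis by (simp add: shape_Leaf)
  next
    case False
    obtain u v where w: "w = u @ Max (set w) # v" "\<forall>x\<in>set u. x < Max (set w)" "\<forall>x\<in>set v. x < Max (set w)"
      using word_split[OF less.prems False] by blast
    have du: "distinct u" "distinct v" using less.prems w(1) by (metis distinct_append distinct.simps(2))+
    have lu: "length u < length w" "length v < length w" using w(1) by (metis length_append length_Cons less_add_Suc1 add_Suc_right trans_less_add1 less_add_Suc2)+
    have dt: "dtree w = Node (dtree u) (Max (set w)) (dtree v)"
      using w less.prems dtree_split by metis
    have iw: "invs w = invs u + invs v + length v + crs u v"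
      using w invs_split by metis
    have "mn (shape (dtree u)) \<le> invs u" "mn (shape (dtree v)) \<le> invs v"
      using less.hyps[OF lu(1) du(1)] less.hyps[OF lu(2) du(2)] by simp_all
    then show ?thesis unfolding dt iw using size_dtree[OF du(2)] by (simp add: shape_Node size_shape)
  qed
qed

lemma set_eq_lemma:
  fixes A B A' B' :: "nat set"
  assumes "A \<union> B = A' \<union> B'" "A \<inter> B = {}" "A' \<inter> B' = {}" "finite A" "finite A'"
    "card A = card A'" "\<forall>x\<in>A. \<forall>y\<in>B. x \<le> y" "\<forall>x\<in>A'. \<forall>y\<in>B'. x \<le> y"
  shows "A = A'"
proof (rule ccontr)
  assume ne: "A \<noteq> A'"
  have ex: "\<exists>x. x \<in> A \<and> x \<notin> A'"
  proof (rule ccontr)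
    assume "\<not> ?thesis" hence "A \<subseteq> A'" by auto
    then show False using ne assms(5,6) card_subset_eq by blast
  qed
  have ex2: "\<exists>x. x \<in> A' \<and> x \<notin> A"
  proof (rule ccontr)
    assume "\<not> ?thesis" hence "A' \<subseteq> A" by auto
    then show False using ne assms(4,6) card_subset_eq by metis
  qed
  obtain x where x: "x \<in> A" "x \<notin> A'" using ex by blast
  obtain y where y: "y \<in> A'" "y \<notin> A" using ex2 by blast
  have "x \<in> B'" using x assms(1) by blast
  have "y \<in> B" using y assms(1) by blast
  have "x \<le> y" using assms(7) x(1) \<open>y \<in> B\<close> by blast
  moreover have "y \<le> x" using assms(8) y(1) \<open>x \<in> B'\<close> by blast
  ultimately show False using x y by simp
qed

lemma min_unique:
  "distinct w1 \<Longrightarrow> distinct w2 \<Longrightarrow> set w1 = set w2 \<Longrightarrow> shape (dtree w1) = shape (dtree w2) \<Longrightarrow>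
   invs w1 = mn (shape (dtree w1)) \<Longrightarrow> invs w2 = mn (shape (dtree w2)) \<Longrightarrow> w1 = w2"
proof (induction "length w1" arbitrary: w1 w2 rule: less_induct)
  case less
  show ?case
  proof (cases "w1 = []")
    case True then show ?thesis using less.prems by simp
  next
    case False
    hence F2: "w2 \<noteq> []" using less.prems(3) by auto
    define m where "m = Max (set w1)"
    have m2: "m = Max (set w2)" using less.prems(3) m_def by simp
    obtain u1 v1 where w1: "w1 = u1 @ m # v1" "\<forall>x\<in>set u1. x < m" "\<forall>x\<in>set v1. x < m"
      using word_split[OF less.prems(1) False] m_def by blast
    obtain u2 v2 where w2: "w2 = u2 @ m # v2" "\<forall>x\<in>set u2. x < m" "\<forall>x\<in>set v2. x < m"
      using word_split[OF less.prems(2) F2] m2 by blast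
    have d1: "distinct u1" "distinct v1" "set u1 \<inter> set v1 = {}" "m \<notin> set u1" "m \<notin> set v1"
      using less.prems(1) w1(1) by auto
    have d2: "distinct u2" "distinct v2" "set u2 \<inter> set v2 = {}" "m \<notin> set u2" "m \<notin> set v2"
      using less.prems(2) w2(1) by auto
    have dt1: "dtree w1 = Node (dtree u1) m (dtree v1)" using w1 less.prems(1) dtree_split by metis
    have dt2: "dtree w2 = Node (dtree u2) m (dtree v2)" using w2 less.prems(2) dtree_split by metis
    have sh: "shape (dtree u1) = shape (dtree u2)" "shape (dtree v1) = shape (dtree v2)"
      using less.prems(4) unfolding dt1 dt2 by (simp_all add: shape_Node)
    have i1: "invs w1 = invs u1 + invs v1 + length v1 + crs u1 v1" using w1 invs_split by metis
    have i2: "invs w2 = invs u2 + invs v2 + length v2 + crs u2 v2" using w2 invs_split by metis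
    have le1: "mn (shape (dtree u1)) \<le> invs u1" "mn (shape (dtree v1)) \<le> invs v1"
      using mn_le_invs d1 by auto
    have le2: "mn (shape (dtree u2)) \<le> invs u2" "mn (shape (dtree v2)) \<le> invs v2"
      using mn_le_invs d2 by auto
    have e1: "invs u1 = mn (shape (dtree u1))" "invs v1 = mn (shape (dtree v1))" "crs u1 v1 = 0"
      using less.prems(5) le1 size_dtree[OF d1(2)] unfolding i1 dt1 by (simp_all add: shape_Node size_shape)
    have e2: "invs u2 = mn (shape (dtree u2))" "invs v2 = mn (shape (dtree v2))" "crs u2 v2 = 0"
      using less.prems(6) le2 size_dtree[OF d2(2)] unfolding i2 dt2 by (simp_all add: shape_Node size_shape)
    have o1: "\<forall>x\<in>set u1. \<forall>y\<in>set v1. x \<le> y"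
      using e1(3) crs_crsS[OF d1(1) d1(2)] crsS_zero_iff[of "set u1" "set v1"] by simp
    have o2: "\<forall>x\<in>set u2. \<forall>y\<in>set v2. x \<le> y"
      using e2(3) crs_crsS[OF d2(1) d2(2)] crsS_zero_iff[of "set u2" "set v2"] by simp
    have Y: "set u1 \<union> set v1 = set u2 \<union> set v2"
    proof -
      have "set u1 \<union> set v1 = set w1 - {m}" using w1(1) d1 by auto
      also have "\<dots> = set w2 - {m}" using less.prems(3) by simp
      also have "\<dots> = set u2 \<union> set v2" using w2(1) d2 by auto
      finally show ?thesis .
    qed
    have cu: "card (set u1) = card (set u2)"
      using size_dtree[OF d1(1)] size_dtree[OF d2(1)] sh(1) size_shape
      by (metis distinct_card d1(1) d2(1))
    have su: "set u1 = set u2"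
      by (rule set_eq_lemma[OF Y d1(3) d2(3) _ _ cu o1 o2]) simp_all
    have sv: "set v1 = set v2" using Y su d1(3) d2(3) by blast
    have lu: "length u1 < length w1" "length v1 < length w1" using w1(1) by simp_all
    have "u1 = u2" using less.hyps[OF lu(1) d1(1) d2(1) su sh(1)] e1 e2 sh by simp
    moreover have "v1 = v2" using less.hyps[OF lu(2) d1(2) d2(2) sv sh(2)] e1 e2 sh by simp
    ultimately show ?thesis using w1 w2 by simp
  qed
qed




lemma finite_Wd: "finite X \<Longrightarrow> finite (Wd X t)"
proof -
  assume f: "finite X"
  have "Wd X t \<subseteq> {w. set w \<subseteq> X \<and> length w = card X}"
    by (auto simp: Wd_def distinct_card[symmetric])
  moreover have "finite {w. set w \<subseteq> X \<and> length w = card X}"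
    by (rule finite_lists_length_eq[OF f])
  ultimately show ?thesis by (rule finite_subset)
qed

lemma Wd_bij:
  assumes f: "finite X" and ne: "X \<noteq> {}"
  defines "m \<equiv> Max X"
  shows "bij_betw (\<lambda>(A, u, v). u @ m # v)
     (SIGMA A:{A. A \<subseteq> X - {m} \<and> card A = size l}. Wd A l \<times> Wd (X - {m} - A) r)
     (Wd X (Node l () r))"
proof -
  have mX: "m \<in> X" "\<forall>x\<in>X. x \<le> m" using f ne by (auto simp: m_def)
  show ?thesis
  proof (rule bij_betwI')
    fix x y
    assume x: "x \<in> (SIGMA A:{A. A \<subseteq> X - {m} \<and> card A = size l}. Wd A l \<times> Wd (X - {m} - A) r)"
       and y: "y \<in> (SIGMA A:{A. A \<subseteq> X - {m} \<and> card A = size l}. Wd A l \<times> Wd (X - {m} - A) r)"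
    obtain A u v where xx: "x = (A, u, v)" by (cases x) auto
    obtain A' u' v' where yy: "y = (A', u', v')" by (cases y) auto
    show "((case x of (A, u, v) \<Rightarrow> u @ m # v) = (case y of (A, u, v) \<Rightarrow> u @ m # v)) = (x = y)"
    proof
      assume e: "(case x of (A, u, v) \<Rightarrow> u @ m # v) = (case y of (A, u, v) \<Rightarrow> u @ m # v)"
      have "m \<notin> set u" "m \<notin> set u'" using x y xx yy by (auto simp: Wd_def)
      hence "u = u' \<and> v = v'" using split_unique e xx yy by simp
      moreover have "A = set u" "A' = set u'" using x y xx yy by (auto simp: Wd_def)
      ultimately show "x = y" using xx yy by simp
    qed simp
  next
    fix x
    assume x: "x \<in> (SIGMA A:{A. A \<subseteq> X - {m} \<and> card A = size l}. Wd A l \<times> Wd (X - {m} - A) r)"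
    obtain A u v where xx: "x = (A, u, v)" by (cases x) auto
    have A: "A \<subseteq> X - {m}" and u: "distinct u" "set u = A" "shape (dtree u) = l"
      and v: "distinct v" "set v = X - {m} - A" "shape (dtree v) = r"
      using x xx by (auto simp: Wd_def)
    have ltX: "z < m" if "z \<in> X - {m}" for z using that mX le_neq_implies_less by blast
    have lt: "\<forall>x\<in>set u. x < m" "\<forall>x\<in>set v. x < m"
      using A u v ltX by auto
    have d: "distinct (u @ m # v)" using A u v by auto
    have "set (u @ m # v) = X" using A u v mX by auto
    moreover have "shape (dtree (u @ m # v)) = Node l () r"
      using dtree_split[OF d lt] u v by (simp add: shape_Node)
    ultimately show "(case x of (A, u, v) \<Rightarrow> u @ m # v) \<in> Wd X (Node l () r)"
      using xx d by (simp add: Wd_def)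
  next
    fix w assume w: "w \<in> Wd X (Node l () r)"
    hence dw: "distinct w" "set w = X" "shape (dtree w) = Node l () r" by (auto simp: Wd_def)
    have wne: "w \<noteq> []" using dw(3) by (auto simp: shape_Leaf)
    have mw: "Max (set w) = m" using dw(2) m_def by simp
    obtain u v where uv: "w = u @ m # v" "\<forall>x\<in>set u. x < m" "\<forall>x\<in>set v. x < m"
      using word_split[OF dw(1) wne] mw by metis
    have d: "distinct u" "distinct v" "set u \<inter> set v = {}" "m \<notin> set u" "m \<notin> set v"
      using dw(1) uv(1) by auto
    have dt: "dtree w = Node (dtree u) m (dtree v)" using uv dw(1) dtree_split by metis
    have sh: "shape (dtree u) = l" "shape (dtree v) = r" using dw(3) unfolding dt by (simp_all add: shape_Node)
    have cu: "card (set u) = size l"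
      using size_dtree[OF d(1)] sh(1) size_shape distinct_card[OF d(1)] by metis
    have su: "set u \<subseteq> X - {m}" using dw(2) uv(1) d by auto
    have sv: "set v = X - {m} - set u" using dw(2) uv(1) d by auto
    show "\<exists>x\<in>(SIGMA A:{A. A \<subseteq> X - {m} \<and> card A = size l}. Wd A l \<times> Wd (X - {m} - A) r).
        w = (case x of (A, u, v) \<Rightarrow> u @ m # v)"
      by (rule bexI[of _ "(set u, u, v)"]) (use uv d sh cu su sv in \<open>auto simp: Wd_def\<close>)
  qed
qed

lemma Wd_Leaf: "Wd {} Leaf = {[]}"
  by (auto simp: Wd_def shape_Leaf)

lemma sum_Wd:
  "finite X \<Longrightarrow> card X = size t \<Longrightarrow>
   (\<Sum>w\<in>Wd X t. qq ^ invs w) = qq ^ mn t * qpoch (size t) / hk t"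
proof (induction t arbitrary: X)
  case Leaf
  then have "X = {}" by simp
  then show ?case by (simp add: Wd_Leaf invs_Nil qpoch_0)
next
  case (Node l x r)
  have xu: "x = ()" by simp
  have ne: "X \<noteq> {}" using Node.prems by auto
  define m where "m = Max X"
  define Y where "Y = X - {m}"
  have mX: "m \<in> X" "\<forall>z\<in>X. z \<le> m" using Node.prems(1) ne by (auto simp: m_def)
  have fY: "finite Y" using Node.prems(1) by (simp add: Y_def)
  have cY: "card Y = size l + size r" using Node.prems mX by (simp add: Y_def)
  let ?S = "{A. A \<subseteq> Y \<and> card A = size l}"
  have fS: "finite ?S" using fY by (auto intro: finite_subset[of _ "Pow Y"])
  have fA: "finite A" if "A \<in> ?S" for A using that fY by (auto dest: finite_subset)
  have trm: "qq ^ invs (u @ m # v) = qq ^ (size r + crsS A (Y - A)) * (qq ^ invs u * qq ^ invs v)"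
    if A: "A \<in> ?S" and u: "u \<in> Wd A l" and v: "v \<in> Wd (Y - A) r" for A u v
  proof -
    have uu: "distinct u" "set u = A" "shape (dtree u) = l" and vv: "distinct v" "set v = Y - A" "shape (dtree v) = r"
      using u v by (auto simp: Wd_def)
    have ltX: "z < m" if "z \<in> X - {m}" for z using that mX le_neq_implies_less by blast
    have lt: "\<forall>x\<in>set u. x < m" "\<forall>x\<in>set v. x < m"
      using A uu vv ltX by (auto simp: Y_def)
    have lv: "length v = size r" using size_dtree[OF vv(1)] vv(3) size_shape by metis
    have "invs (u @ m # v) = invs u + invs v + size r + crsS A (Y - A)"
      using invs_split[OF lt] lv crs_crsS[OF uu(1) vv(1)] uu vv by simp
    then show ?thesis by (simp add: power_add)
  qed
  have "(\<Sum>w\<in>Wd X (Node l x r). qq ^ invs w) =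
     (\<Sum>p\<in>(SIGMA A:?S. Wd A l \<times> Wd (Y - A) r). qq ^ invs (case p of (A, u, v) \<Rightarrow> u @ m # v))"
    unfolding xu Y_def m_def by (rule sum.reindex_bij_betw[OF Wd_bij[OF Node.prems(1) ne], symmetric])
  also have "\<dots> = (\<Sum>A\<in>?S. \<Sum>p\<in>Wd A l \<times> Wd (Y - A) r. qq ^ invs (fst p @ m # snd p))"
  proof -
    have fin: "\<forall>A\<in>?S. finite (Wd A l \<times> Wd (Y - A) r)"
    proof
      fix A assume "A \<in> ?S"
      then show "finite (Wd A l \<times> Wd (Y - A) r)" using fA fY finite_Wd by blast
    qed
    show ?thesis
      apply (subst sum.Sigma[OF fS fin])
      apply (rule sum.cong[OF refl])
      apply clarify
      apply (simp only: prod.case fst_conv snd_conv)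
      done
  qed
  also have "\<dots> = (\<Sum>A\<in>?S. \<Sum>u\<in>Wd A l. \<Sum>v\<in>Wd (Y - A) r. qq ^ (size r + crsS A (Y - A)) * (qq ^ invs u * qq ^ invs v))"
  proof (rule sum.cong[OF refl])
    fix A assume A: "A \<in> ?S"
    show "(\<Sum>p\<in>Wd A l \<times> Wd (Y - A) r. qq ^ invs (fst p @ m # snd p)) =
       (\<Sum>u\<in>Wd A l. \<Sum>v\<in>Wd (Y - A) r. qq ^ (size r + crsS A (Y - A)) * (qq ^ invs u * qq ^ invs v))"
      apply (subst sum.cartesian_product)
      apply (rule sum.cong[OF refl])
      apply (clarify)
      apply (simp only: fst_conv snd_conv prod.case trm[OF A])
      done
  qed
  also have "\<dots> = (\<Sum>A\<in>?S. qq ^ (size r + crsS A (Y - A)) * ((\<Sum>u\<in>Wd A l. qq ^ invs u) * (\<Sum>v\<in>Wd (Y - A) r. qq ^ invs v)))"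
    by (intro sum.cong refl) (subst sum_product, simp only: sum_distrib_left)
  also have "\<dots> = (\<Sum>A\<in>?S. qq ^ (size r + crsS A (Y - A)) * ((qq ^ mn l * qpoch (size l) / hk l) * (qq ^ mn r * qpoch (size r) / hk r)))"
  proof (intro sum.cong refl)
    fix A assume A: "A \<in> ?S"
    have cA: "card (Y - A) = size r" using A fA[OF A] cY by (simp add: card_Diff_subset)
    show "qq ^ (size r + crsS A (Y - A)) * ((\<Sum>u\<in>Wd A l. qq ^ invs u) * (\<Sum>v\<in>Wd (Y - A) r. qq ^ invs v)) =
       qq ^ (size r + crsS A (Y - A)) * ((qq ^ mn l * qpoch (size l) / hk l) * (qq ^ mn r * qpoch (size r) / hk r))"
      using Node.IH(1)[OF fA[OF A]] Node.IH(2)[of "Y - A"] A cA fY by simp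
  qed
  also have "\<dots> = qq ^ (size r + mn l + mn r) * qpoch (size l) * qpoch (size r) / (hk l * hk r) * Gs Y (size l)"
    unfolding Gs_def sum_distrib_left
    by (rule sum.cong[OF refl]) (simp add: power_add hk_nz field_simps)
  also have "\<dots> = qq ^ (size r + mn l + mn r) * qpoch (size l + size r) / (hk l * hk r)"
    using gauss[OF fY, of "size l"] cY by (simp add: algebra_simps)
  also have "\<dots> = qq ^ mn (Node l x r) * qpoch (size (Node l x r)) / hk (Node l x r)"
  proof -
    define d where "d = qq ^ Suc (size l + size r) - 1"
    have dnz: "d \<noteq> 0" using qq_pow_m1_nz[of "Suc (size l + size r)"] by (simp add: d_def del: power_Suc)
    have h: "hk (Node l x r) = d * (hk l * hk r)" by (simp add: d_def del: power_Suc)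
    have q: "qpoch (size (Node l x r)) = qpoch (size l + size r) * d" by (simp add: d_def qpoch_Suc del: power_Suc)
    have mnn: "mn (Node l x r) = size r + mn l + mn r" by simp
    show ?thesis unfolding h q mnn using dnz by simp
  qed
  finally show ?case .
qed




section \<open>Canonical words\<close>

fun canon :: "nat \<Rightarrow> unit tree \<Rightarrow> nat list" where
  "canon c Leaf = []"
| "canon c (Node l x r) = canon c l @ [c + size l + size r + 1] @ canon (c + size l) r"

lemma length_canon[simp]: "length (canon c t) = size t"
  by (induction t arbitrary: c) auto

lemma set_canon: "set (canon c t) = {c + 1..c + size t}"
proof (induction t arbitrary: c)
  case Leaf then show ?case by simp
next
  case (Node l x r)
  show ?case
    using Node.IH(1)[of c] Node.IH(2)[of "c + size l"] by auto
qed

lemma distinct_canon: "distinct (canon c t)"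
proof (induction t arbitrary: c)
  case Leaf then show ?case by simp
next
  case (Node l x r)
  then show ?case by (auto simp: set_canon)
qed

lemma canon_shift: "canon c t = map (\<lambda>y. y + c) (canon 0 t)"
proof (induction t arbitrary: c)
  case Leaf then show ?case by simp
next
  case (Node l x r)
  show ?case using Node.IH(1)[of c] Node.IH(2)[of "c + size l"] Node.IH(2)[of "size l"] by simp
qed

lemma canon_props:
  "shape (dtree (canon c t)) = t \<and> invs (canon c t) = mn t"
proof (induction t arbitrary: c)
  case Leaf then show ?case by (simp add: shape_Leaf invs_Nil)
next
  case (Node l x r)
  define m where "m = c + size l + size r + 1"
  have lt: "\<forall>y\<in>set (canon c l). y < m" "\<forall>y\<in>set (canon (c + size l) r). y < m"
    by (auto simp: set_canon m_def)
  have d: "distinct (canon c l @ m # canon (c + size l) r)"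
    using distinct_canon[of c l] distinct_canon[of "c + size l" r] lt by (auto simp: set_canon)
  have dt: "dtree (canon c (Node l x r)) = Node (dtree (canon c l)) m (dtree (canon (c + size l) r))"
    using dtree_split[OF d lt] by (simp add: m_def)
  have cr: "crs (canon c l) (canon (c + size l) r) = 0"
    by (simp add: crs_crsS distinct_canon crsS_zero_iff set_canon)
  have iv: "invs (canon c (Node l x r)) = invs (canon c l) + invs (canon (c + size l) r) + size r"
    using invs_split[OF lt] cr by (simp add: m_def)
  show ?case using Node.IH[of c] Node.IH[of "c + size l"] unfolding dt iv
    by (simp add: shape_Node)
qed

definition pos :: "nat list \<Rightarrow> nat \<Rightarrow> nat" where
  "pos s i = (THE p. p < length s \<and> s ! p = i)"

lemma pos_spec: "distinct s \<Longrightarrow> i \<in> set s \<Longrightarrow> pos s i < length s \<and> s ! (pos s i) = i"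
proof -
  assume d: "distinct s" and i: "i \<in> set s"
  obtain p where p: "p < length s" "s ! p = i" using i by (auto simp: in_set_conv_nth)
  have "\<exists>!p. p < length s \<and> s ! p = i"
    using p d by (metis nth_eq_iff_index_eq)
  then show ?thesis unfolding pos_def by (rule theI')
qed

lemma pos_nth: "distinct s \<Longrightarrow> p < length s \<Longrightarrow> pos s (s ! p) = p"
proof -
  assume d: "distinct s" and p: "p < length s"
  have h: "pos s (s ! p) < length s" "s ! pos s (s ! p) = s ! p" using pos_spec[OF d, of "s ! p"] p by auto
  show ?thesis using nth_eq_iff_index_eq[OF d h(1) p] h(2) by simp
qed

lemma perms_length: "s \<in> perms n \<Longrightarrow> length s = n"
  unfolding perms_def using distinct_card by fastforce

lemma perm_inverse_alt: "perm_inverse s = map (\<lambda>i. pos s i + 1) [1..<length s + 1]"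
  by (simp add: perm_inverse_def pos_def)

lemma length_pinv[simp]: "length (perm_inverse s) = length s"
  by (simp add: perm_inverse_def del: upt_Suc)

lemma nth_pinv: "i < length s \<Longrightarrow> perm_inverse s ! i = pos s (i + 1) + 1"
  by (simp add: perm_inverse_alt del: upt_Suc)

lemma pinv_perms: assumes s: "s \<in> perms n" shows "perm_inverse s \<in> perms n"
proof -
  have d: "distinct s" and ss: "set s = {1..n}" using s by (auto simp: perms_def)
  have ls: "length s = n" using perms_length[OF s] .
  have inj: "inj_on (\<lambda>i. pos s i + 1) {1..n}"
  proof (rule inj_onI)
    fix i j assume ij: "i \<in> {1..n}" "j \<in> {1..n}" "pos s i + 1 = pos s j + 1"
    have "s ! pos s i = i" using pos_spec[OF d, of i] ss ij(1) by blast
    moreover have "s ! pos s j = j" using pos_spec[OF d, of j] ss ij(2) by blast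
    moreover have "pos s i = pos s j" using ij(3) by simp
    ultimately show "i = j" by metis
  qed
  have dist: "distinct (perm_inverse s)"
    unfolding perm_inverse_alt ls using inj by (simp add: distinct_map atLeastLessThanSuc_atLeastAtMost del: upt_Suc)
  have "set (perm_inverse s) = (\<lambda>i. pos s i + 1) ` {1..n}"
    unfolding perm_inverse_alt ls by (simp add: atLeastLessThanSuc_atLeastAtMost del: upt_Suc)
  also have "\<dots> = {1..n}"
  proof
    show "(\<lambda>i. pos s i + 1) ` {1..n} \<subseteq> {1..n}"
    proof
      fix y assume "y \<in> (\<lambda>i. pos s i + 1) ` {1..n}"
      then obtain i where i: "i \<in> {1..n}" "y = pos s i + 1" by blast
      have "pos s i < n" using pos_spec[OF d, of i] i ss ls by simp
      then show "y \<in> {1..n}" using i by simp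
    qed
  next
    show "{1..n} \<subseteq> (\<lambda>i. pos s i + 1) ` {1..n}"
    proof
      fix k assume k: "k \<in> {1..n}"
      hence "k - 1 < length s" using ls by auto
      hence "pos s (s ! (k - 1)) = k - 1" "s ! (k - 1) \<in> {1..n}" using pos_nth[OF d] ss nth_mem[of "k - 1" s] by simp_all
      then show "k \<in> (\<lambda>i. pos s i + 1) ` {1..n}" using k by (intro image_eqI[of _ _ "s ! (k - 1)"]) auto
    qed
  qed
  finally show ?thesis using dist by (simp add: perms_def)
qed

lemma pinv_pinv: assumes s: "s \<in> perms n" shows "perm_inverse (perm_inverse s) = s"
proof -
  have d: "distinct s" and ss: "set s = {1..n}" using s by (auto simp: perms_def)
  have ls: "length s = n" using perms_length[OF s] .
  have dp: "distinct (perm_inverse s)" using pinv_perms[OF s] by (simp add: perms_def)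
  show ?thesis
  proof (rule nth_equalityI)
    show "length (perm_inverse (perm_inverse s)) = length s" by simp
  next
    fix i assume i: "i < length (perm_inverse (perm_inverse s))"
    hence il: "i < length s" by simp
    have si: "s ! i \<in> {1..n}" using il ss nth_mem by blast
    have lt: "s ! i - 1 < length s" using si ls by auto
    have "perm_inverse s ! (s ! i - 1) = pos s (s ! i) + 1"
      using nth_pinv[OF lt] si by simp
    also have "\<dots> = i + 1" using pos_nth[OF d il] by simp
    finally have "pos (perm_inverse s) (i + 1) = s ! i - 1"
      using pos_nth[OF dp, of "s ! i - 1"] lt by simp
    then show "perm_inverse (perm_inverse s) ! i = s ! i"
      using si il by (simp add: nth_pinv)
  qed
qed

lemma invs_pinv_le: assumes s: "s \<in> perms n" shows "invs (perm_inverse s) \<le> invs s"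
proof -
  have d: "distinct s" and ss: "set s = {1..n}" using s by (auto simp: perms_def)
  have ls: "length s = n" using perms_length[OF s] .
  have ps: "pos s i < n \<and> s ! pos s i = i" if "i \<in> {1..n}" for i
    using pos_spec[OF d, of i] ss ls that by simp
  let ?A = "{(i, j). i < j \<and> j < length (perm_inverse s) \<and> perm_inverse s ! j < perm_inverse s ! i}"
  let ?B = "{(i, j). i < j \<and> j < length s \<and> s ! j < s ! i}"
  let ?f = "\<lambda>(i, j). (pos s (j + 1), pos s (i + 1))"
  have "card ?A \<le> card ?B"
  proof (rule card_inj_on_le)
    show "inj_on ?f ?A"
    proof (rule inj_onI)
      fix x y assume x: "x \<in> ?A" and y: "y \<in> ?A" and e: "?f x = ?f y"
      obtain i j where xx: "x = (i, j)" by (cases x)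
      obtain i' j' where yy: "y = (i', j')" by (cases y)
      have a: "(i, j) \<in> ?A" "(i', j') \<in> ?A" "pos s (j + 1) = pos s (j' + 1)" "pos s (i + 1) = pos s (i' + 1)"
        using x y e xx yy by auto
      have r: "i + 1 \<in> {1..n}" "j + 1 \<in> {1..n}" "i' + 1 \<in> {1..n}" "j' + 1 \<in> {1..n}" using a ls by auto
      have "i + 1 = s ! pos s (i + 1)" "i' + 1 = s ! pos s (i' + 1)"
           "j + 1 = s ! pos s (j + 1)" "j' + 1 = s ! pos s (j' + 1)" using ps r by simp_all
      then show "x = y" using a(3,4) xx yy by simp
    qed
    show "?f ` ?A \<subseteq> ?B"
    proof (rule subsetI)
      fix z assume z: "z \<in> ?f ` ?A"
      then obtain i j where zz: "z = ?f (i, j)" and ijA: "(i, j) \<in> ?A" by auto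
      have a: "i < j" "j < length (perm_inverse s)" "perm_inverse s ! j < perm_inverse s ! i" using ijA by auto
      have ij: "i + 1 \<in> {1..n}" "j + 1 \<in> {1..n}" using a ls by auto
      have "pos s (j + 1) < pos s (i + 1)" using a ls by (simp add: nth_pinv)
      moreover have "pos s (i + 1) < length s" using ps[OF ij(1)] ls by simp
      moreover have "s ! pos s (i + 1) < s ! pos s (j + 1)" using ps[OF ij(1)] ps[OF ij(2)] a by simp
      ultimately show "z \<in> ?B" using zz by simp
    qed
    show "finite ?B" by (rule finite_subset[of _ "{..<length s} \<times> {..<length s}"]) auto
  qed
  then show ?thesis by (simp add: invs_def)
qed

lemma invs_pinv: assumes s: "s \<in> perms n" shows "invs (perm_inverse s) = invs s"
  using invs_pinv_le[OF s] invs_pinv_le[OF pinv_perms[OF s]] pinv_pinv[OF s] by simp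

lemma pinv_bij: "bij_betw perm_inverse (perms n) (perms n)"
  by (rule bij_betwI[of _ _ _ perm_inverse]) (auto simp: pinv_perms pinv_pinv)




fun alpha :: "unit tree \<Rightarrow> nat list" where
  "alpha Leaf = []"
| "alpha (Node l x r) = alpha l @ map (\<lambda>y. y + size l + 1) (alpha r) @ [size l + 1]"

lemma length_alpha[simp]: "length (alpha t) = size t"
  by (induction t) auto

lemma alpha_canon:
  "i < size t \<Longrightarrow> 1 \<le> alpha t ! i \<and> alpha t ! i \<le> size t \<and> canon 0 t ! (alpha t ! i - 1) = i + 1"
proof (induction t arbitrary: i)
  case Leaf then show ?case by simp
next
  case (Node l x r)
  define a where "a = size l"
  define b where "b = size r"
  have cn: "canon 0 (Node l x r) = canon 0 l @ [a + b + 1] @ canon a r" by (simp add: a_def b_def)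
  have an: "alpha (Node l x r) = alpha l @ map (\<lambda>y. y + a + 1) (alpha r) @ [a + 1]" by (simp add: a_def)
  have i: "i < a + b + 1" using Node.prems by (simp add: a_def b_def)
  consider "i < a" | "a \<le> i" "i < a + b" | "i = a + b" using i by linarith
  then show ?case
  proof cases
    case 1
    have v: "alpha (Node l x r) ! i = alpha l ! i" unfolding an using 1 by (simp add: nth_append a_def)
    have IH: "1 \<le> alpha l ! i \<and> alpha l ! i \<le> a \<and> canon 0 l ! (alpha l ! i - 1) = i + 1"
      using Node.IH(1)[of i] 1 by (simp add: a_def)
    have v1: "1 \<le> alpha l ! i" "alpha l ! i \<le> a" using IH by auto
    have lt: "alpha l ! i - 1 < length (canon 0 l)" using v1 unfolding a_def length_canon by linarith
    have "canon 0 (Node l x r) ! (alpha l ! i - 1) = canon 0 l ! (alpha l ! i - 1)"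
      unfolding cn using lt by (simp add: nth_append)
    then show ?thesis using IH v by (simp add: a_def b_def)
  next
    case 2
    define j where "j = i - a"
    have j: "j < b" "i = a + j" using 2 by (auto simp: j_def)
    have v: "alpha (Node l x r) ! i = alpha r ! j + a + 1" unfolding an using j by (simp add: nth_append a_def b_def)
    have IH: "1 \<le> alpha r ! j \<and> alpha r ! j \<le> b \<and> canon 0 r ! (alpha r ! j - 1) = j + 1"
      using Node.IH(2)[of j] j by (simp add: b_def)
    have w1: "1 \<le> alpha r ! j" "alpha r ! j \<le> b" "canon 0 r ! (alpha r ! j - 1) = j + 1" using IH by auto
    have lt2: "alpha r ! j - 1 < length (canon 0 r)" using w1 unfolding b_def length_canon by linarith
    have "canon 0 (Node l x r) ! (alpha r ! j + a + 1 - 1) = canon a r ! (alpha r ! j - 1)"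
      unfolding cn using w1 by (simp add: nth_append a_def)
    also have "\<dots> = canon 0 r ! (alpha r ! j - 1) + a"
      using lt2 by (subst canon_shift) simp
    finally show ?thesis using IH v j by (simp add: a_def b_def)
  next
    case 3
    have v: "alpha (Node l x r) ! i = a + 1" unfolding an using 3 by (simp add: nth_append a_def b_def)
    have "canon 0 (Node l x r) ! a = a + b + 1" unfolding cn by (simp add: nth_append a_def)
    then show ?thesis using v 3 by (simp add: a_def b_def)
  qed
qed

lemma canon_perms: "canon 0 t \<in> perms (size t)"
  by (simp add: perms_def distinct_canon set_canon)

lemma pinv_canon: "perm_inverse (canon 0 t) = alpha t"
proof (rule nth_equalityI)
  show "length (perm_inverse (canon 0 t)) = length (alpha t)" by simp
next
  fix i assume "i < length (perm_inverse (canon 0 t))"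
  hence i: "i < size t" by simp
  have ac: "1 \<le> alpha t ! i" "alpha t ! i \<le> size t" "canon 0 t ! (alpha t ! i - 1) = i + 1"
    using alpha_canon[OF i] by auto
  have "pos (canon 0 t) (i + 1) = alpha t ! i - 1"
    using pos_nth[OF distinct_canon, of "alpha t ! i - 1" 0 t] ac by simp
  then show "perm_inverse (canon 0 t) ! i = alpha t ! i"
    using i ac by (simp add: nth_pinv)
qed

lemma alpha_perms: "alpha t \<in> perms (size t)"
  using pinv_perms[OF canon_perms] pinv_canon by simp

lemma pinv_alpha: "perm_inverse (alpha t) = canon 0 t"
  using pinv_pinv[OF canon_perms] pinv_canon by simp

lemma invs_alpha: "invs (alpha t) = mn t"
  using invs_pinv[OF canon_perms] pinv_canon canon_props by simp

lemma size_shape_pinv: "s \<in> perms n \<Longrightarrow> size (shape (dtree (perm_inverse s))) = n"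
  using pinv_perms[of s n] size_dtree perms_length by (simp add: size_shape perms_def)

lemma sylv_min_eq:
  assumes s: "s \<in> perms n"
  shows "sylv_min n s = alpha (shape (dtree (perm_inverse s)))"
proof -
  define t where "t = shape (dtree (perm_inverse s))"
  have n: "size t = n" using size_shape_pinv[OF s] by (simp add: t_def)
  have inc: "alpha t \<in> sylv_class n s"
    using alpha_perms[of t] n pinv_alpha[of t] canon_props[of 0 t]
    by (simp add: sylv_class_def sylv_equiv_def t_def)
  have lb: "invs (alpha t) \<le> invs b" if "b \<in> sylv_class n s" for b
  proof -
    have b: "b \<in> perms n" "shape (dtree (perm_inverse b)) = t"
      using that by (auto simp: sylv_class_def sylv_equiv_def t_def)
    have "mn t \<le> invs (perm_inverse b)"
      using mn_le_invs[of "perm_inverse b"] pinv_perms[OF b(1)] b(2) by (simp add: perms_def)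
    then show ?thesis using invs_pinv[OF b(1)] invs_alpha by simp
  qed
  have uq: "a = alpha t" if a: "a \<in> sylv_class n s" "\<forall>b\<in>sylv_class n s. invs a \<le> invs b" for a
  proof -
    have ap: "a \<in> perms n" "shape (dtree (perm_inverse a)) = t"
      using a(1) by (auto simp: sylv_class_def sylv_equiv_def t_def)
    have pa: "perm_inverse a \<in> perms n" using pinv_perms[OF ap(1)] .
    have "invs a \<le> invs (alpha t)" using a(2) inc by blast
    hence le: "invs a \<le> mn t" using invs_alpha by simp
    have ge: "mn t \<le> invs (perm_inverse a)"
      using mn_le_invs[of "perm_inverse a"] pa ap(2) by (simp add: perms_def)
    have eq: "invs (perm_inverse a) = mn t" using le ge invs_pinv[OF ap(1)] by simp
    have d1: "distinct (perm_inverse a)" "set (perm_inverse a) = {1..n}" using pa by (auto simp: perms_def)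
    have d2: "distinct (canon 0 t)" "set (canon 0 t) = {1..n}" using distinct_canon set_canon n by auto
    have cp: "shape (dtree (canon 0 t)) = t" "invs (canon 0 t) = mn t" using canon_props by auto
    have ss: "set (perm_inverse a) = set (canon 0 t)" using d1 d2 by simp
    have sh: "shape (dtree (perm_inverse a)) = shape (dtree (canon 0 t))" using ap(2) cp by simp
    have pc: "perm_inverse a = canon 0 t"
      by (rule min_unique[OF d1(1) d2(1) ss sh]) (use eq ap(2) cp in simp_all)
    have "a = perm_inverse (perm_inverse a)" using pinv_pinv[OF ap(1)] by simp
    also have "\<dots> = alpha t" using pc pinv_canon by simp
    finally show ?thesis .
  qed
  show ?thesis unfolding sylv_min_def t_def[symmetric]
  proof (rule the_equality)
    show "alpha t \<in> sylv_class n s \<and> (\<forall>b\<in>sylv_class n s. invs (alpha t) \<le> invs b)" using inc lb by blast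
  next
    fix a assume "a \<in> sylv_class n s \<and> (\<forall>b\<in>sylv_class n s. invs a \<le> invs b)"
    then show "a = alpha t" using uq by blast
  qed
qed




definition lc :: "nat list \<Rightarrow> nat \<Rightarrow> nat" where
  "lc w j = length (filter (\<lambda>x. w ! j < x) (take j w))"

lemma lc_card: "j < length w \<Longrightarrow> lc w j = card {i. i < j \<and> w ! j < w ! i}"
  unfolding lc_def length_filter_conv_card by (intro arg_cong[where f=card]) auto

lemma invD_sum: "invD w E = (\<Sum>j\<in>{j. j < length w \<and> j \<in> E}. lc w j)"
proof -
  let ?J = "{j. j < length w \<and> j \<in> E}"
  let ?S = "SIGMA j:?J. {i. i < j \<and> w ! j < w ! i}"
  have e: "{(i, j). i < j \<and> j < length w \<and> w ! j < w ! i \<and> j \<in> E} = (\<lambda>(j, i). (i, j)) ` ?S"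
    by auto
  have inj: "inj_on (\<lambda>(j, i). (i, j)) ?S" by (auto simp: inj_on_def)
  have "invD w E = card ?S" unfolding invD_def e card_image[OF inj] ..
  also have "\<dots> = (\<Sum>j\<in>?J. card {i. i < j \<and> w ! j < w ! i})"
    by (rule card_SigmaI) auto
  also have "\<dots> = (\<Sum>j\<in>?J. lc w j)"
    by (rule sum.cong) (auto simp: lc_card)
  finally show ?thesis .
qed

lemma set_alpha: "set (alpha t) = {1..size t}"
  using alpha_perms[of t] by (simp add: perms_def)

lemma alpha_code: "j < size t \<Longrightarrow> lc (alpha t) j = code t ! j"
proof (induction t arbitrary: j)
  case Leaf then show ?case by simp
next
  case (Node l x r)
  define a where "a = size l"
  define b where "b = size r"
  define A where "A = alpha l"
  define B where "B = map (\<lambda>y. y + a + 1) (alpha r)"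
  have an: "alpha (Node l x r) = A @ B @ [a + 1]" by (simp add: a_def A_def B_def)
  have cn: "code (Node l x r) = code l @ code r @ [b]" by (simp add: b_def)
  have lA: "length A = a" "length B = b" by (simp_all add: A_def B_def a_def b_def)
  have sA: "\<forall>y\<in>set A. y \<le> a" using set_alpha[of l] by (auto simp: A_def a_def)
  have sB: "\<forall>y\<in>set B. a + 1 < y" using set_alpha[of r] by (auto simp: B_def)
  have j: "j < a + b + 1" using Node.prems by (simp add: a_def b_def)
  consider "j < a" | "a \<le> j" "j < a + b" | "j = a + b" using j by linarith
  then show ?case
  proof cases
    case 1
    have "lc (alpha (Node l x r)) j = lc A j"
      unfolding lc_def an using 1 lA by (simp add: nth_append)
    also have "\<dots> = code l ! j" using Node.IH(1)[of j] 1 by (simp add: A_def a_def)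
    also have "\<dots> = code (Node l x r) ! j" unfolding cn using 1 by (simp add: nth_append a_def)
    finally show ?thesis .
  next
    case 2
    define j' where "j' = j - a"
    have j': "j' < b" "j = a + j'" using 2 by (auto simp: j'_def)
    have v: "alpha (Node l x r) ! j = alpha r ! j' + a + 1"
      unfolding an using j' lA by (simp add: nth_append B_def)
    have tk: "take j (alpha (Node l x r)) = A @ take j' B"
      unfolding an using j' lA by simp
    have fA: "filter (\<lambda>y. alpha r ! j' + a + 1 < y) A = []"
      using sA by (auto simp: filter_empty_conv)
    have fB: "filter (\<lambda>y. alpha r ! j' + a + 1 < y) (take j' B) = map (\<lambda>y. y + a + 1) (filter (\<lambda>y. alpha r ! j' < y) (take j' (alpha r)))"
      unfolding B_def take_map filter_map by (simp add: o_def)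
    have "lc (alpha (Node l x r)) j = lc (alpha r) j'"
      unfolding lc_def v tk using fA fB by simp
    also have "\<dots> = code r ! j'" using Node.IH(2)[of j'] j' by (simp add: b_def)
    also have "\<dots> = code (Node l x r) ! j" unfolding cn using j' by (simp add: nth_append a_def b_def)
    finally show ?thesis .
  next
    case 3
    have v: "alpha (Node l x r) ! j = a + 1" unfolding an using 3 lA by (simp add: nth_append)
    have tk: "take j (alpha (Node l x r)) = A @ B" unfolding an using 3 lA by simp
    have fA: "filter (\<lambda>y. a + 1 < y) A = []" using sA by (auto simp: filter_empty_conv)
    have fB: "filter (\<lambda>y. a + 1 < y) B = B" using sB by (simp add: filter_id_conv)
    have "lc (alpha (Node l x r)) j = b" unfolding lc_def v tk using fA fB lA by simp
    also have "\<dots> = code (Node l x r) ! j" unfolding cn using 3 by (simp add: nth_append a_def b_def)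
    finally show ?thesis .
  qed
qed

lemma invD_alpha: "invD (alpha t) E = (\<Sum>j\<in>{j. j < size t \<and> j \<in> E}. code t ! j)"
  unfolding invD_sum by (rule sum.cong) (auto simp: alpha_code)

lemma finite_perms: "finite (perms n)"
proof (rule finite_subset)
  show "perms n \<subseteq> {xs. set xs \<subseteq> {1..n} \<and> length xs = n}"
    using perms_length by (auto simp: perms_def)
  show "finite {xs. set xs \<subseteq> {1..n} \<and> length xs = n}"
    by (rule finite_lists_length_eq) simp
qed

lemma ribbon_sum:
  "(\<Sum>s\<in>perms n. let a = sylv_min n s in qq ^ (invs s - invs a + invD a E)) =
   (\<Sum>t\<in>trees n. qpoch n / hk t * qq ^ invD (alpha t) E)"
proof -
  define G where "G u = qq ^ (invs u - mn (shape (dtree u)) + invD (alpha (shape (dtree u))) E)" for u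
  have FG: "(let a = sylv_min n (perm_inverse u) in qq ^ (invs (perm_inverse u) - invs a + invD a E)) = G u"
    if u: "u \<in> perms n" for u
    using sylv_min_eq[OF pinv_perms[OF u]] pinv_pinv[OF u] invs_pinv[OF u] invs_alpha
    by (simp add: G_def Let_def)
  have "(\<Sum>s\<in>perms n. let a = sylv_min n s in qq ^ (invs s - invs a + invD a E)) =
        (\<Sum>u\<in>perms n. let a = sylv_min n (perm_inverse u) in qq ^ (invs (perm_inverse u) - invs a + invD a E))"
    by (rule sum.reindex_bij_betw[OF pinv_bij, symmetric])
  also have "\<dots> = (\<Sum>u\<in>perms n. G u)" by (rule sum.cong) (simp_all add: FG)
  also have "\<dots> = (\<Sum>t\<in>trees n. \<Sum>u\<in>{u. u \<in> perms n \<and> shape (dtree u) = t}. G u)"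
  proof (rule sum.group[symmetric])
    show "finite (perms n)" by (rule finite_perms)
    show "finite (trees n)" by (rule finite_trees)
    show "(\<lambda>u. shape (dtree u)) ` perms n \<subseteq> trees n"
      using size_dtree perms_length by (auto simp: trees_def size_shape perms_def)
  qed
  also have "\<dots> = (\<Sum>t\<in>trees n. qpoch n / hk t * qq ^ invD (alpha t) E)"
  proof (rule sum.cong[OF refl])
    fix t assume t: "t \<in> trees n"
    have st: "size t = n" using t by (simp add: trees_def)
    have fib: "{u. u \<in> perms n \<and> shape (dtree u) = t} = Wd {1..n} t"
      by (auto simp: perms_def Wd_def)
    have Gu: "G u = qq ^ invs u * (qq ^ invD (alpha t) E / qq ^ mn t)" if u: "u \<in> Wd {1..n} t" for u
    proof -
      have "mn t \<le> invs u" using mn_le_invs[of u] u by (auto simp: Wd_def)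
      moreover have "shape (dtree u) = t" using u by (simp add: Wd_def)
      ultimately show ?thesis unfolding G_def using qq_nz
        by (simp add: power_add power_diff)
    qed
    have "(\<Sum>u\<in>{u. u \<in> perms n \<and> shape (dtree u) = t}. G u) =
          (\<Sum>u\<in>Wd {1..n} t. qq ^ invs u) * (qq ^ invD (alpha t) E / qq ^ mn t)"
      unfolding fib sum_distrib_right by (rule sum.cong) (simp_all add: Gu)
    also have "\<dots> = qq ^ mn t * qpoch n / hk t * (qq ^ invD (alpha t) E / qq ^ mn t)"
      using sum_Wd[of "{1..n}" t] st by simp
    also have "\<dots> = qpoch n / hk t * qq ^ invD (alpha t) E"
      using qq_nz by simp
    finally show "(\<Sum>u\<in>{u. u \<in> perms n \<and> shape (dtree u) = t}. G u) = qpoch n / hk t * qq ^ invD (alpha t) E" .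
  qed
  finally show ?thesis .
qed




section \<open>Compositions and descents\<close>

lemma descents_Nil: "descents [] = {}"
  by (simp add: descents_def)

lemma descents_Cons:
  "descents (k # I) = (if I = [] then {} else insert k ((+) k ` descents I))"
proof (cases "I = []")
  case True then show ?thesis by (simp add: descents_def)
next
  case False
  have "descents (k # I) = {sum_list (take i (k # I)) | i. 1 \<le> i \<and> i < Suc (length I)}"
    by (simp add: descents_def)
  also have "\<dots> = insert k ((+) k ` descents I)"
  proof (rule set_eqI, rule iffI)
    fix x assume "x \<in> {sum_list (take i (k # I)) | i. 1 \<le> i \<and> i < Suc (length I)}"
    then obtain i where i: "x = sum_list (take i (k # I))" "1 \<le> i" "i < Suc (length I)" by blast
    show "x \<in> insert k ((+) k ` descents I)"
    proof (cases "i = 1")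
      case True then show ?thesis using i by simp
    next
      case False
      then obtain i' where i': "i = Suc i'" "1 \<le> i'" using i by (cases i) auto
      have "x = k + sum_list (take i' I)" using i i' by simp
      moreover have "sum_list (take i' I) \<in> descents I" using i i' by (auto simp: descents_def)
      ultimately show ?thesis by blast
    qed
  next
    fix x assume x: "x \<in> insert k ((+) k ` descents I)"
    show "x \<in> {sum_list (take i (k # I)) | i. 1 \<le> i \<and> i < Suc (length I)}"
    proof (cases "x = k")
      case True
      then show ?thesis using False True by (intro CollectI exI[of _ 1]) auto
    next
      case xk: False
      then obtain i where i: "x = k + sum_list (take i I)" "1 \<le> i" "i < length I"
        using x by (auto simp: descents_def)
      then show ?thesis by (intro CollectI exI[of _ "Suc i"]) simp
    qed
  qed
  finally show ?thesis using False by simp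
qed

lemma comps_Cons: "k # I \<in> comps n \<longleftrightarrow> k \<noteq> 0 \<and> k \<le> n \<and> I \<in> comps (n - k)"
  by (auto simp: comps_def)

lemma comps_0: "comps 0 = {[]}"
  by (auto simp: comps_def) (metis list.exhaust list.set_intros(1) add_is_0 sum_list.Cons)

lemma comps_nonempty: "I \<in> comps n \<Longrightarrow> n \<ge> 1 \<Longrightarrow> I \<noteq> []"
  by (auto simp: comps_def)

lemma descents_props: "I \<in> comps n \<Longrightarrow> descents I \<subseteq> {1..<n} \<and> card (descents I) = length I - 1"
proof (induction I arbitrary: n)
  case Nil then show ?case by (simp add: descents_Nil)
next
  case (Cons k I)
  have k: "k \<ge> 1" "k \<le> n" "I \<in> comps (n - k)" using Cons.prems comps_Cons by auto
  show ?case
  proof (cases "I = []")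
    case True then show ?thesis by (simp add: descents_Cons)
  next
    case False
    have IH: "descents I \<subseteq> {1..<n - k}" "card (descents I) = length I - 1" using Cons.IH[OF k(3)] by auto
    have nk: "n - k \<ge> 1" using k(3) False by (cases I) (auto simp: comps_def)
    have sub: "insert k ((+) k ` descents I) \<subseteq> {1..<n}" using IH(1) k nk by (auto simp: subset_iff)
    have nin: "k \<notin> (+) k ` descents I" using IH(1) by auto
    have "card (insert k ((+) k ` descents I)) = Suc (card (descents I))"
      using nin by (simp add: card_image inj_on_def finite_subset[OF IH(1)])
    then show ?thesis using sub IH(2) False by (simp add: descents_Cons)
  qed
qed

lemma descents_inj: "I \<in> comps n \<Longrightarrow> J \<in> comps n \<Longrightarrow> descents I = descents J \<Longrightarrow> I = J"
proof (induction I arbitrary: J n)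
  case Nil
  then show ?case by (cases J) (auto simp: comps_def descents_Nil)
next
  case (Cons k I)
  obtain k' J' where J: "J = k' # J'" using Cons.prems by (cases J) (auto simp: comps_def)
  have k: "k \<ge> 1" "I \<in> comps (n - k)" "k' \<ge> 1" "J' \<in> comps (n - k')"
    using Cons.prems J comps_Cons by auto
  show ?case
  proof (cases "I = []")
    case True
    hence "descents J = {}" using Cons.prems by (simp add: descents_Cons)
    hence "J' = []" using J by (auto simp: descents_Cons split: if_splits)
    then show ?thesis using True J Cons.prems by (simp add: comps_def)
  next
    case False
    hence F2: "J' \<noteq> []" using Cons.prems J by (auto simp: descents_Cons split: if_splits)
    have dI: "descents (k # I) = insert k ((+) k ` descents I)" using False by (simp add: descents_Cons)
    have dJ: "descents J = insert k' ((+) k' ` descents J')" using F2 J by (simp add: descents_Cons)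
    have pI: "descents I \<subseteq> {1..<n - k}" using descents_props[OF k(2)] by auto
    have pJ: "descents J' \<subseteq> {1..<n - k'}" using descents_props[OF k(4)] by auto
    have mI: "Min (descents (k # I)) = k" unfolding dI using pI by (intro Min_eqI) (auto intro: finite_subset)
    have mJ: "Min (descents J) = k'" unfolding dJ using pJ by (intro Min_eqI) (auto intro: finite_subset)
    have kk: "k = k'" using mI mJ Cons.prems(3) by simp
    have "(+) k ` descents I = (+) k ` descents J'"
    proof -
      have "(+) k ` descents I = descents (k # I) - {k}" unfolding dI using pI by auto
      also have "\<dots> = descents J - {k}" using Cons.prems(3) by simp
      also have "\<dots> = (+) k ` descents J'" unfolding dJ kk using pJ by auto
      finally show ?thesis .
    qed
    hence "descents I = descents J'" using inj_image_eq_iff[of "(+) k"] by (simp add: inj_def)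
    then have "I = J'" using Cons.IH[OF k(2)] k(4) kk by simp
    then show ?thesis using J kk by simp
  qed
qed

lemma descents_surj: "D \<subseteq> {1..<n} \<Longrightarrow> \<exists>I\<in>comps n. descents I = D"
proof (induction n arbitrary: D rule: less_induct)
  case (less n)
  show ?case
  proof (cases "D = {}")
    case True
    show ?thesis
    proof (cases "n = 0")
      case True then show ?thesis using \<open>D = {}\<close> by (intro bexI[of _ "[]"]) (simp_all add: comps_def descents_Nil)
    next
      case False then show ?thesis using \<open>D = {}\<close> by (intro bexI[of _ "[n]"]) (simp_all add: comps_def descents_Cons)
    qed
  next
    case False
    have fD: "finite D" using less.prems by (rule finite_subset) simp
    define k where "k = Min D"
    have kD: "k \<in> D" "\<forall>d\<in>D. k \<le> d" using fD False by (auto simp: k_def)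
    have k: "1 \<le> k" "k < n" using kD less.prems by auto
    define D' where "D' = (\<lambda>d. d - k) ` (D - {k})"
    have D': "D' \<subseteq> {1..<n - k}"
    proof
      fix x assume "x \<in> D'"
      then obtain d where d: "d \<in> D" "d \<noteq> k" "x = d - k" by (auto simp: D'_def)
      have "k < d" using kD d by (metis le_neq_implies_less)
      moreover have "d < n" using d less.prems by auto
      ultimately show "x \<in> {1..<n - k}" using d by auto
    qed
    obtain I' where I': "I' \<in> comps (n - k)" "descents I' = D'" using less.IH[of "n - k" D'] k D' by auto
    have ne: "I' \<noteq> []" using I' k by (auto simp: comps_def)
    have bk: "(+) k ` D' = D - {k}"
    proof -
      have "(+) k ` D' = (\<lambda>d. k + (d - k)) ` (D - {k})" unfolding D'_def by (simp add: image_image)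
      also have "\<dots> = (\<lambda>d. d) ` (D - {k})" by (rule image_cong) (use kD in auto)
      also have "\<dots> = D - {k}" by simp
      finally show ?thesis .
    qed
    have "k # I' \<in> comps n" using I' k by (auto simp: comps_def)
    moreover have "descents (k # I') = D" using ne I' bk kD by (auto simp: descents_Cons)
    ultimately show ?thesis by blast
  qed
qed




lemma descents_bij: "bij_betw descents (comps n) (Pow {1..<n})"
proof (rule bij_betwI')
  fix I J assume "I \<in> comps n" "J \<in> comps n"
  then show "(descents I = descents J) = (I = J)" using descents_inj by blast
next
  fix I assume "I \<in> comps n" then show "descents I \<in> Pow {1..<n}" using descents_props by blast
next
  fix D assume "D \<in> Pow {1..<n}"
  then obtain I where "I \<in> comps n" "descents I = D" using descents_surj[of D n] by auto
  then show "\<exists>I\<in>comps n. D = descents I" by blast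
qed

lemma finite_comps: "finite (comps n)"
proof -
  have "finite (Pow {1..<n})" by simp
  then show ?thesis using bij_betw_finite[OF descents_bij] by simp
qed

lemma conj_comp_desc:
  assumes I: "I \<in> comps n"
  shows "conj_comp I \<in> comps n \<and> descents (conj_comp I) = (\<lambda>d. n - d) ` ({1..n-1} - descents I)"
proof -
  have sI: "sum_list I = n" using I by (simp add: comps_def)
  let ?T = "(\<lambda>d. n - d) ` ({1..n-1} - descents I)"
  have T: "?T \<subseteq> {1..<n}"
  proof
    fix x assume "x \<in> ?T"
    then obtain d where "d \<in> {1..n-1}" "x = n - d" by blast
    then show "x \<in> {1..<n}" by auto
  qed
  obtain J where J: "J \<in> comps n" "descents J = ?T" using descents_surj[OF T] by blast
  have "\<exists>!J. J \<in> comps n \<and> descents J = ?T"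
  proof (rule ex1I[of _ J])
    show "J \<in> comps n \<and> descents J = ?T" using J by simp
  next
    fix J' assume "J' \<in> comps n \<and> descents J' = ?T"
    then show "J' = J" using descents_inj[of J' n J] J by simp
  qed
  then have "(THE J. J \<in> comps n \<and> descents J = ?T) \<in> comps n \<and> descents (THE J. J \<in> comps n \<and> descents J = ?T) = ?T"
    by (rule theI')
  then show ?thesis unfolding conj_comp_def sI Let_def .
qed

lemma prod_shift1: "(\<Prod>d\<in>{1..<m::nat}. g (d - 1)) = (\<Prod>i<m - 1. (g i :: K))"
proof -
  have b: "bij_betw Suc {..<m - 1} {1..<m}"
    by (rule bij_betwI[of _ _ _ "\<lambda>d. d - 1"]) auto
  have "(\<Prod>i<m - 1. g (Suc i - 1)) = (\<Prod>d\<in>{1..<m}. g (d - 1))"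
    by (rule prod.reindex_bij_betw[OF b])
  then show ?thesis by simp
qed

lemma SWl_formula:
  "w \<in> comps (length xs) \<Longrightarrow> SWl xs w = (\<Prod>d\<in>{1..<length xs} - descents w. qq ^ (xs ! (d - 1)) - 1)"
proof (induction w arbitrary: xs)
  case Nil
  then have "xs = []" by (simp add: comps_def)
  then show ?case by simp
next
  case (Cons k w)
  define L where "L = length xs"
  have k: "k \<ge> 1" "k \<le> L" "w \<in> comps (length (drop k xs))" using Cons.prems comps_Cons by (auto simp: L_def)
  define f where "f d = qq ^ (xs ! (d - 1)) - 1" for d
  have P: "(\<Prod>i<k - 1. qq ^ (xs ! i) - 1) = (\<Prod>d\<in>{1..<k}. f d)"
    unfolding f_def by (rule prod_shift1[symmetric])
  have IH: "SWl (drop k xs) w = (\<Prod>d\<in>{1..<L - k} - descents w. qq ^ (drop k xs ! (d - 1)) - 1)"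
    using Cons.IH[OF k(3)] by (simp add: L_def)
  have sw: "SWl xs (k # w) = (\<Prod>d\<in>{1..<k}. f d) * SWl (drop k xs) w"
    using k P by (simp add: L_def)
  show ?case
  proof (cases "w = []")
    case True
    hence kL: "k = L" using k(2) k(3) by (simp add: comps_def L_def)
    have "SWl (drop k xs) w = 1" using True kL by (simp add: L_def)
    then show ?thesis using sw True kL by (simp add: descents_Cons f_def L_def)
  next
    case False
    have dw: "descents w \<subseteq> {1..<L - k}" using descents_props[OF k(3)] by (simp add: L_def)
    have e: "{1..<L} - descents (k # w) = {1..<k} \<union> (+) k ` ({1..<L - k} - descents w)"
    proof (rule set_eqI, rule iffI)
      fix x assume x: "x \<in> {1..<L} - descents (k # w)"
      show "x \<in> {1..<k} \<union> (+) k ` ({1..<L - k} - descents w)"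
      proof (cases "x < k")
        case True then show ?thesis using x by auto
      next
        case xk: False
        hence "x \<noteq> k" using x False by (auto simp: descents_Cons)
        hence "k < x" using xk by simp
        have xk': "x = k + (x - k)" using \<open>k < x\<close> by simp
        have nd: "x - k \<notin> descents w"
        proof
          assume "x - k \<in> descents w"
          then have "k + (x - k) \<in> (+) k ` descents w" by blast
          then show False using x False xk' by (simp add: descents_Cons)
        qed
        have "x - k \<in> {1..<L - k}" using x \<open>k < x\<close> by auto
        then show ?thesis using nd xk' by blast
      qed
    next
      fix x assume x: "x \<in> {1..<k} \<union> (+) k ` ({1..<L - k} - descents w)"
      then show "x \<in> {1..<L} - descents (k # w)" using False dw k by (auto simp: descents_Cons)
    qed
    have disj: "{1..<k} \<inter> (+) k ` ({1..<L - k} - descents w) = {}" by auto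
    have "(\<Prod>d\<in>{1..<L} - descents (k # w). f d) = (\<Prod>d\<in>{1..<k}. f d) * (\<Prod>d\<in>(+) k ` ({1..<L - k} - descents w). f d)"
      unfolding e by (rule prod.union_disjoint) (use disj in auto)
    also have "(\<Prod>d\<in>(+) k ` ({1..<L - k} - descents w). f d) = (\<Prod>d\<in>{1..<L - k} - descents w. f (k + d))"
      using prod.reindex[of "(+) k" "{1..<L - k} - descents w" f] by (simp add: inj_on_def o_def)
    also have "\<dots> = SWl (drop k xs) w"
      unfolding IH f_def using k by (intro prod.cong refl) (auto simp: L_def add.commute)
    finally show ?thesis using sw by (simp add: f_def L_def)
  qed
qed

lemma SWl_notcomps: "w \<notin> comps (length xs) \<Longrightarrow> SWl xs w = 0"
proof (induction w arbitrary: xs)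
  case Nil then show ?case by (auto simp: comps_def)
next
  case (Cons k w)
  show ?case
  proof (cases "k = 0 \<or> k > length xs")
    case True then show ?thesis by auto
  next
    case False
    hence "w \<notin> comps (length (drop k xs))" using Cons.prems comps_Cons by auto
    then show ?thesis using Cons.IH False by simp
  qed
qed

lemma ribbon_apply:
  assumes I: "I \<in> comps n"
  shows "ribbon I w = (if w \<in> comps n \<and> descents w \<subseteq> descents I then (-1) ^ (length I - length w) else 0)"
proof -
  have sI: "sum_list I = n" using I by (simp add: comps_def)
  let ?S = "{J \<in> comps n. descents J \<subseteq> descents I}"
  have fS: "finite ?S" using finite_comps by simp
  have "ribbon I w = (\<Sum>J\<in>?S. (-1) ^ (length I - length J) * Spow J w)"
    unfolding ribbon_def sI by simp
  also have "\<dots> = (\<Sum>J\<in>?S. if w = J then (-1) ^ (length I - length J) else 0)"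
    by (rule sum.cong) (auto simp: Spow_apply comps_def)
  also have "\<dots> = (if w \<in> ?S then (-1) ^ (length I - length w) else 0)"
    using fS by (simp add: sum.delta)
  finally show ?thesis by simp
qed

lemma mobius:
  assumes w: "w \<in> comps n"
  shows "(\<Sum>I\<in>comps n. (if descents w \<subseteq> descents I then (-1) ^ (length I - length w) else 0) *
            (\<Prod>d\<in>{1..<n} - descents I. x d)) = (\<Prod>d\<in>{1..<n} - descents w. (x d - (1::K)))"
proof -
  let ?U = "{1..<n}"
  let ?A = "descents w"
  let ?C = "?U - ?A"
  define F where "F E = (if ?A \<subseteq> E then (-1) ^ (card E - card ?A) else 0) * (\<Prod>d\<in>?U - E. x d)" for E
  have Aw: "?A \<subseteq> ?U" "card ?A = length w - 1" using descents_props[OF w] by auto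
  have lens: "length I - length w = card (descents I) - card ?A" if I: "I \<in> comps n" for I
  proof (cases "n = 0")
    case True then show ?thesis using I w by (simp add: comps_0 descents_Nil)
  next
    case False
    have "I \<noteq> []" "w \<noteq> []" using comps_nonempty I w False by auto
    then have "length I \<ge> 1" "length w \<ge> 1" by (simp_all add: Suc_le_eq)
    moreover have "card (descents I) = length I - 1" using descents_props[OF I] by simp
    ultimately show ?thesis using Aw(2) by linarith
  qed
  have "(\<Sum>I\<in>comps n. (if ?A \<subseteq> descents I then (-1) ^ (length I - length w) else 0) *
            (\<Prod>d\<in>?U - descents I. x d)) = (\<Sum>I\<in>comps n. F (descents I))"
    by (rule sum.cong) (simp_all add: F_def lens)
  also have "\<dots> = (\<Sum>E\<in>Pow ?U. F E)"
    by (rule sum.reindex_bij_betw[OF descents_bij])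
  also have "\<dots> = (\<Sum>E\<in>(\<lambda>B. ?A \<union> B) ` Pow ?C. F E)"
  proof (rule sum.mono_neutral_right)
    show "finite (Pow ?U)" by simp
    show "(\<lambda>B. ?A \<union> B) ` Pow ?C \<subseteq> Pow ?U" using Aw by auto
    show "\<forall>E\<in>Pow ?U - (\<lambda>B. ?A \<union> B) ` Pow ?C. F E = 0"
    proof
      fix E assume E: "E \<in> Pow ?U - (\<lambda>B. ?A \<union> B) ` Pow ?C"
      have "\<not> ?A \<subseteq> E"
      proof
        assume "?A \<subseteq> E"
        hence "E = ?A \<union> (E - ?A)" by auto
        moreover have "E - ?A \<in> Pow ?C" using E by auto
        ultimately show False using E by blast
      qed
      then show "F E = 0" by (simp add: F_def)
    qed
  qed
  also have "\<dots> = (\<Sum>B\<in>Pow ?C. F (?A \<union> B))"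
  proof -
    have inj: "inj_on (\<lambda>B. ?A \<union> B) (Pow ?C)"
    proof (rule inj_onI)
      fix B1 B2 assume B: "B1 \<in> Pow ?C" "B2 \<in> Pow ?C" "?A \<union> B1 = ?A \<union> B2"
      have "B1 = (?A \<union> B1) - ?A" "B2 = (?A \<union> B2) - ?A" using B(1,2) by auto
      then show "B1 = B2" using B(3) by simp
    qed
    show ?thesis using sum.reindex[OF inj, of F] by (simp add: o_def)
  qed
  also have "\<dots> = (\<Sum>B\<in>Pow ?C. (-1) ^ card B * (\<Prod>d\<in>?C - B. x d))"
  proof (rule sum.cong[OF refl])
    fix B assume B: "B \<in> Pow ?C"
    have fB: "finite B" using B by (auto intro: finite_subset)
    have fA: "finite ?A" using Aw(1) by (auto intro: finite_subset)
    have c: "card (?A \<union> B) - card ?A = card B" using B fB fA by (subst card_Un_disjoint) auto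
    have u: "?U - (?A \<union> B) = ?C - B" by auto
    show "F (?A \<union> B) = (-1) ^ card B * (\<Prod>d\<in>?C - B. x d)" unfolding F_def c u by simp
  qed
  also have "\<dots> = (\<Prod>d\<in>?C. x d - 1)"
    using prod_diff_conv_sum[of ?C x "\<lambda>_. 1"] by simp
  finally show ?thesis .
qed




lemma coef_term:
  assumes I: "I \<in> comps n" and t: "t \<in> trees n"
  shows "qq ^ invD (alpha t) (descents (conj_comp I)) = (\<Prod>d\<in>{1..<n} - descents I. qq ^ (rc t ! (d - 1)))"
proof -
  have st: "size t = n" using t by (simp add: trees_def)
  have dc: "descents (conj_comp I) = (\<lambda>d. n - d) ` ({1..n-1} - descents I)"
    using conj_comp_desc[OF I] by simp
  have U: "{1..n-1} = {1..<n}" by auto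
  have e: "{j. j < size t \<and> j \<in> descents (conj_comp I)} = (\<lambda>d. n - d) ` ({1..<n} - descents I)"
    unfolding dc U st by auto
  have inj: "inj_on (\<lambda>d. n - d) ({1..<n} - descents I)" by (auto simp: inj_on_def)
  have "invD (alpha t) (descents (conj_comp I)) = (\<Sum>j\<in>(\<lambda>d. n - d) ` ({1..<n} - descents I). code t ! j)"
    unfolding invD_alpha e ..
  also have "\<dots> = (\<Sum>d\<in>{1..<n} - descents I. code t ! (n - d))"
    using sum.reindex[OF inj, of "\<lambda>j. code t ! j"] by (simp add: o_def)
  also have "\<dots> = (\<Sum>d\<in>{1..<n} - descents I. rc t ! (d - 1))"
  proof (rule sum.cong[OF refl])
    fix d assume d: "d \<in> {1..<n} - descents I"
    have dl: "d - 1 < length (code t)" using d st by auto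
    have "rc t ! (d - 1) = code t ! (length (code t) - Suc (d - 1))"
      unfolding rc_def by (rule rev_nth[OF dl])
    also have "\<dots> = code t ! (n - d)" using d st by simp
    finally show "code t ! (n - d) = rc t ! (d - 1)" by simp
  qed
  finally show ?thesis by (simp add: power_sum)
qed

lemma main_pt:
  assumes n: "n \<ge> 1"
  shows "qpoch n * Phi n w = (\<Sum>I\<in>comps n. ribbon_coef n I * ribbon I w)"
proof (cases "w \<in> comps n")
  case False
  have "Phi n w = 0" unfolding Phi_def nsym_sum_apply nsym_smult_apply
    by (rule sum.neutral) (use False in \<open>auto simp: trees_def SWl_notcomps\<close>)
  moreover have "(\<Sum>I\<in>comps n. ribbon_coef n I * ribbon I w) = 0"
    by (rule sum.neutral) (use False in \<open>simp add: ribbon_apply\<close>)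
  ultimately show ?thesis by simp
next
  case True
  define x where "x t d = qq ^ (rc t ! (d - 1))" for t d
  have rcI: "ribbon_coef n I = (\<Sum>t\<in>trees n. qpoch n / hk t * (\<Prod>d\<in>{1..<n} - descents I. x t d))"
    if I: "I \<in> comps n" for I
    unfolding ribbon_coef_def ribbon_sum using coef_term[OF I] by (simp add: x_def)
  have "(\<Sum>I\<in>comps n. ribbon_coef n I * ribbon I w) =
     (\<Sum>I\<in>comps n. (\<Sum>t\<in>trees n. qpoch n / hk t * (\<Prod>d\<in>{1..<n} - descents I. x t d)) *
        (if descents w \<subseteq> descents I then (-1) ^ (length I - length w) else 0))"
    by (rule sum.cong[OF refl]) (simp add: rcI ribbon_apply True)
  also have "\<dots> = (\<Sum>t\<in>trees n. qpoch n / hk t * (\<Sum>I\<in>comps n.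
        (if descents w \<subseteq> descents I then (-1) ^ (length I - length w) else 0) * (\<Prod>d\<in>{1..<n} - descents I. x t d)))"
    by (simp add: sum_distrib_right sum_distrib_left mult_ac sum.swap[of _ "trees n"])
  also have "\<dots> = (\<Sum>t\<in>trees n. qpoch n / hk t * (\<Prod>d\<in>{1..<n} - descents w. x t d - 1))"
    by (simp only: mobius[OF True])
  also have "\<dots> = (\<Sum>t\<in>trees n. qpoch n * (inverse (hk t) * SWl (rc t) w))"
  proof (rule sum.cong[OF refl])
    fix t assume t: "t \<in> trees n"
    have lr: "length (rc t) = n" using t by (simp add: trees_def)
    have "SWl (rc t) w = (\<Prod>d\<in>{1..<n} - descents w. x t d - 1)"
      using SWl_formula[of w "rc t"] True lr by (simp add: x_def)
    then show "qpoch n / hk t * (\<Prod>d\<in>{1..<n} - descents w. x t d - 1) = qpoch n * (inverse (hk t) * SWl (rc t) w)"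
      by (simp add: field_simps)
  qed
  also have "\<dots> = qpoch n * Phi n w"
    by (simp add: Phi_def sum_distrib_left)
  finally show ?thesis by simp
qed

theorem mainTheorem5:
  fixes g :: "nat \<Rightarrow> nsym" and n :: nat
  assumes g0: "g 0 = nsym_one"
    and grec: "\<And>m. m \<ge> 1 \<Longrightarrow>
        nsym_smult (qq ^ m - 1) (g m) =
        nsym_sum {1..m} (\<lambda>k. nsym_mult (S k)
           (nsym_sum (wcomps (k + 1) (m - k)) (\<lambda>js. nsym_prod (map g js))))"
    and n: "n \<ge> 1"
  shows "nsym_smult (qpoch n) (g n) =
         nsym_sum (comps n) (\<lambda>I. nsym_smult (ribbon_coef n I) (ribbon I))"
proof
  fix w
  have "g n = Phi n" by (rule g_eq_Phi[OF g0 grec])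
  then show "nsym_smult (qpoch n) (g n) w = nsym_sum (comps n) (\<lambda>I. nsym_smult (ribbon_coef n I) (ribbon I)) w"
    using main_pt[OF n, of w] by simp
qed


end
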